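(* In the extended twisted super Yangian $\widetilde{\mathscr B}_{\mathbf s,\boldsymbol\varepsilon}$ the product $B(u)B(-u)$ is a scalar matrix: $B(u)B(-u)=f(u)\cdot 1$, where $f(u)$ is a power series in $u^{-2}$ whose coefficients are central in $\widetilde{\mathscr B}_{\mathbf s,\boldsymbol\varepsilon}$.
   Context: Fix integers $m,n\ge 0$, $\kappa=m+n$, a parity sequence $\mathbf s=(s_1,\dots,s_\kappa)\in\{\pm1\}^\kappa$ with exactly $m$ entries equal to $1$, and write $|i|\in\mathbb Z_2$ with $s_i=(-1)^{|i|}$. Let $V=\mathbb C^{m|n}$ have basis $v_i$ of parity $|i|$ and matrix units $E_{ij}$. Fix $\boldsymbol\varepsilon=(\varepsilon_1,\dots,\varepsilon_\kappa)\in\{\pm1\}^\kappa$. Let $\mathcal P=\sum_{i,j}s_jE_{ij}\otimes E_{ji}\in\mathrm{End}(V\otimes V)$ and $R(u)=1-\mathcal P/u$. The extended twisted super Yangian $\widetilde{\mathscr B}_{\mathbf s,\boldsymbol\varepsilon}$ is the unital associative superalgebra generated by $b_{ij}^{(r)}$ ($1\le i,j\le\kappa$, $r\ge1$) of parity $|i|+|j|$, with $b_{ij}(u)=\delta_{ij}\varepsilon_i+\sum_{r\ge1}b_{ij}^{(r)}u^{-r}$, $B(u)=\sum_{i,j}(-1)^{|i||j|+|j|}b_{ij}(u)\otimes E_{ij}$, subject only to the reflection equation $R(u-v)B_1(u)R(u+v)B_2(v)=B_2(v)R(u+v)B_1(u)R(u-v)$ (with $B_1,B_2$ acting in the first, resp.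 second, tensor factor of $\mathrm{End}(V)^{\otimes 2}$, usual super sign conventions). (The twisted super Yangian $\mathscr B_{\mathbf s,\boldsymbol\varepsilon}$ is its quotient by the unitary condition $B(u)B(-u)=1$.) *)

theory Defs
  imports Complex_Main
begin

(* Parity |i| of index i, from the parity sequence s: s i = (-1)^|i| *)
definition par :: "(nat \<Rightarrow> int) \<Rightarrow> nat \<Rightarrow> nat" where
  "par s i = (if s i = 1 then 0 else 1)"

definition msign :: "nat \<Rightarrow> 'a::ring_1" where
  "msign k = (-1) ^ k"

definition is_C_algebra :: "(complex \<Rightarrow> 'a::ring_1) \<Rightarrow> bool" where
  "is_C_algebra phi \<longleftrightarrow>
     phi 1 = 1 \<and> (\<forall>x y. phi (x + y) = phi x + phi y) \<and> (\<forall>x y. phi (x * y) = phi x * phi y)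
     \<and> (\<forall>c a. phi c * a = a * phi c)"

(* coefficient of u^{-r} in b_ij(u) = delta_ij eps_i + sum_{r>=1} b_ij^(r) u^{-r} *)
definition bser :: "(nat \<Rightarrow> nat \<Rightarrow> nat \<Rightarrow> 'a::ring_1) \<Rightarrow> (nat \<Rightarrow> int) \<Rightarrow> nat \<Rightarrow> nat \<Rightarrow> nat \<Rightarrow> 'a" where
  "bser b eps i j r = (if r = 0 then (if i = j then of_int (eps i) else 0) else b i j r)"

(* Even elements of A[[x,y]] (x) End(V) (x) End(V), x = u^{-1}, y = v^{-1}:
   X n m a b c d is the coefficient of  x^n y^m (x) E_ab (x) E_cd.
   For an even element this coefficient has parity |a|+|b|+|c|+|d|. *)
type_synonym 'a tser = "nat \<Rightarrow> nat \<Rightarrow> nat \<Rightarrow> nat \<Rightarrow> nat \<Rightarrow> nat \<Rightarrow> 'a"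

(* product of even elements with the super sign rules
   (x(x)M)(y(x)N) = (-1)^{|M||y|} xy (x) MN  and
   (E_ab(x)E_cd)(E_bf(x)E_dh) = (-1)^{|E_cd||E_bf|} E_af (x) E_ch *)
definition tmul :: "(nat \<Rightarrow> int) \<Rightarrow> nat \<Rightarrow> 'a::ring_1 tser \<Rightarrow> 'a tser \<Rightarrow> 'a tser" where
  "tmul s \<kappa> X Y n m a f c h =
     (\<Sum>p\<le>n. \<Sum>q\<le>m. \<Sum>b\<in>{1..\<kappa>}. \<Sum>d\<in>{1..\<kappa>}.
        msign ((par s a + par s b + par s c + par s d) * (par s b + par s f + par s d + par s h)
               + (par s c + par s d) * (par s b + par s f))
        * X p q a b c d * Y (n - p) (m - q) b f d h)"

definition tadd :: "'a::ring_1 tser \<Rightarrow> 'a tser \<Rightarrow> 'a tser" where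
  "tadd X Y n m a b c d = X n m a b c d + Y n m a b c d"

definition tsub :: "'a::ring_1 tser \<Rightarrow> 'a tser \<Rightarrow> 'a tser" where
  "tsub X Y n m a b c d = X n m a b c d - Y n m a b c d"

definition tconst :: "nat \<Rightarrow> nat \<Rightarrow> (nat \<Rightarrow> nat \<Rightarrow> nat \<Rightarrow> nat \<Rightarrow> 'a::ring_1) \<Rightarrow> 'a tser" where
  "tconst n0 m0 M n m a b c d = (if n = n0 \<and> m = m0 then M a b c d else 0)"

definition Id2 :: "nat \<Rightarrow> nat \<Rightarrow> nat \<Rightarrow> nat \<Rightarrow> 'a::ring_1" where
  "Id2 a b c d = (if a = b \<and> c = d then 1 else 0)"

(* P = sum_{i,j} s_j E_ij (x) E_ji *)
definition Pmat :: "(nat \<Rightarrow> int) \<Rightarrow> nat \<Rightarrow> nat \<Rightarrow> nat \<Rightarrow> nat \<Rightarrow> 'a::ring_1" where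
  "Pmat s a b c d = (if b = c \<and> a = d then of_int (s b) else 0)"

(* B_1(u) = sum (-1)^{|i||j|+|j|} b_ij(u) (x) E_ij (x) 1, as series in x = u^{-1} *)
definition B1 :: "(nat \<Rightarrow> int) \<Rightarrow> (nat \<Rightarrow> int) \<Rightarrow> (nat \<Rightarrow> nat \<Rightarrow> nat \<Rightarrow> 'a::ring_1) \<Rightarrow> 'a tser" where
  "B1 s eps b n m i j c d =
     (if m = 0 \<and> c = d then msign (par s i * par s j + par s j) * bser b eps i j n else 0)"

(* B_2(v) = sum (-1)^{|k||l|+|l|} b_kl(v) (x) 1 (x) E_kl, as series in y = v^{-1} *)
definition B2 :: "(nat \<Rightarrow> int) \<Rightarrow> (nat \<Rightarrow> int) \<Rightarrow> (nat \<Rightarrow> nat \<Rightarrow> nat \<Rightarrow> 'a::ring_1) \<Rightarrow> 'a tser" where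
  "B2 s eps b n m a a' k l =
     (if n = 0 \<and> a = a' then msign (par s k * par s l + par s l) * bser b eps k l m else 0)"

(* (u-v) u^{-1} v^{-1} R(u-v) = (y - x) - x y P   and
   (u+v) u^{-1} v^{-1} R(u+v) = (y + x) - x y P *)
definition Rminus :: "(nat \<Rightarrow> int) \<Rightarrow> 'a::ring_1 tser" where
  "Rminus s = tsub (tsub (tconst 0 1 Id2) (tconst 1 0 Id2)) (tconst 1 1 (Pmat s))"

definition Rplus :: "(nat \<Rightarrow> int) \<Rightarrow> 'a::ring_1 tser" where
  "Rplus s = tsub (tadd (tconst 0 1 Id2) (tconst 1 0 Id2)) (tconst 1 1 (Pmat s))"

(* Reflection equation R(u-v)B_1(u)R(u+v)B_2(v) = B_2(v)R(u+v)B_1(u)R(u-v),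
   after multiplying both sides by the central scalar (u-v)(u+v)u^{-2}v^{-2},
   imposed coefficientwise for all indices in {1..kappa}. *)
definition reflection_eq ::
  "nat \<Rightarrow> (nat \<Rightarrow> int) \<Rightarrow> (nat \<Rightarrow> int) \<Rightarrow> (nat \<Rightarrow> nat \<Rightarrow> nat \<Rightarrow> 'a::ring_1) \<Rightarrow> bool" where
  "reflection_eq \<kappa> s eps b \<longleftrightarrow>
     (\<forall>n m a f c h. a \<in> {1..\<kappa>} \<longrightarrow> f \<in> {1..\<kappa>} \<longrightarrow> c \<in> {1..\<kappa>} \<longrightarrow> h \<in> {1..\<kappa>} \<longrightarrow>
        tmul s \<kappa> (tmul s \<kappa> (tmul s \<kappa> (Rminus s) (B1 s eps b)) (Rplus s)) (B2 s eps b) n m a f c h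
      = tmul s \<kappa> (tmul s \<kappa> (tmul s \<kappa> (B2 s eps b) (Rplus s)) (B1 s eps b)) (Rminus s) n m a f c h)"

(* coefficient of u^{-n} (x) E_il in B(u)B(-u) in A[[u^{-1}]] (x) End(V) *)
definition BBminus :: "nat \<Rightarrow> (nat \<Rightarrow> int) \<Rightarrow> (nat \<Rightarrow> int) \<Rightarrow> (nat \<Rightarrow> nat \<Rightarrow> nat \<Rightarrow> 'a::ring_1)
    \<Rightarrow> nat \<Rightarrow> nat \<Rightarrow> nat \<Rightarrow> 'a" where
  "BBminus \<kappa> s eps b n i l =
     (\<Sum>p\<le>n. \<Sum>j\<in>{1..\<kappa>}.
        msign ((par s i + par s j) * (par s j + par s l))
        * (msign (par s i * par s j + par s j) * bser b eps i j p)
        * (msign (par s j * par s l + par s l) * msign (n - p) * bser b eps j l (n - p)))"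

end

theory Submission
  imports Defs
begin

lemma cauchy3:
  fixes F :: "nat \<Rightarrow> nat \<Rightarrow> nat \<Rightarrow> 'b::comm_monoid_add"
  shows "(\<Sum>p\<le>n. \<Sum>i\<le>p. F i (p - i) (n - p)) = (\<Sum>i\<le>n. \<Sum>j\<le>n - i. F i j (n - i - j))"
proof -
  have "(\<Sum>p\<le>n. \<Sum>i\<le>p. F i (p - i) (n - p)) = (\<Sum>(p,i)\<in>Sigma {..n} (\<lambda>p. {..p}). F i (p - i) (n - p))"
    by (rule sum.Sigma) auto
  also have "\<dots> = (\<Sum>(i,j)\<in>Sigma {..n} (\<lambda>i. {..n-i}). F i j (n - i - j))"
    by (rule sum.reindex_bij_witness[where i="\<lambda>(i,j). (i+j, i)" and j="\<lambda>(p,i). (i, p - i)"]) auto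
  also have "\<dots> = (\<Sum>i\<le>n. \<Sum>j\<le>n - i. F i j (n - i - j))"
    by (rule sum.Sigma[symmetric]) auto
  finally show ?thesis .
qed

lemma tri_swap:
  fixes F :: "nat \<Rightarrow> nat \<Rightarrow> 'b::comm_monoid_add"
  shows "(\<Sum>i\<le>n. \<Sum>j\<le>n - i. F i j) = (\<Sum>j\<le>n. \<Sum>i\<le>n - j. F i j)"
proof -
  have "(\<Sum>i\<le>n. \<Sum>j\<le>n - i. F i j) = (\<Sum>(i,j)\<in>Sigma {..n} (\<lambda>i. {..n-i}). F i j)"
    by (rule sum.Sigma) auto
  also have "\<dots> = (\<Sum>(j,i)\<in>Sigma {..n} (\<lambda>j. {..n-j}). F i j)"
    by (rule sum.reindex_bij_witness[where j="\<lambda>(i,j). (j,i)" and i="\<lambda>(i,j). (j,i)"]) auto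
  also have "\<dots> = (\<Sum>j\<le>n. \<Sum>i\<le>n - j. F i j)"
    by (rule sum.Sigma[symmetric]) auto
  finally show ?thesis .
qed

lemma swap22:
  "(\<Sum>x\<in>A. \<Sum>y\<in>B. \<Sum>z\<in>C. \<Sum>w\<in>D. V x y z w) = (\<Sum>z\<in>C. \<Sum>w\<in>D. \<Sum>x\<in>A. \<Sum>y\<in>B. V x y z w)"
proof -
  have "(\<Sum>x\<in>A. \<Sum>y\<in>B. \<Sum>z\<in>C. \<Sum>w\<in>D. V x y z w) = (\<Sum>x\<in>A. \<Sum>z\<in>C. \<Sum>y\<in>B. \<Sum>w\<in>D. V x y z w)"
    by (rule sum.cong[OF refl], rule sum.swap)
  also have "\<dots> = (\<Sum>z\<in>C. \<Sum>x\<in>A. \<Sum>y\<in>B. \<Sum>w\<in>D. V x y z w)"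
    by (rule sum.swap)
  also have "\<dots> = (\<Sum>z\<in>C. \<Sum>x\<in>A. \<Sum>w\<in>D. \<Sum>y\<in>B. V x y z w)"
    by (rule sum.cong[OF refl], rule sum.cong[OF refl], rule sum.swap)
  also have "\<dots> = (\<Sum>z\<in>C. \<Sum>w\<in>D. \<Sum>x\<in>A. \<Sum>y\<in>B. V x y z w)"
    by (rule sum.cong[OF refl], rule sum.swap)
  finally show ?thesis .
qed

lemma msign_add: "msign (a + b) = (msign a * msign b :: 'a::ring_1)"
  by (simp add: msign_def power_add)

lemma msign_even: "even k \<Longrightarrow> msign k = (1::'a::ring_1)"
  by (simp add: msign_def)

lemma msign_odd: "odd k \<Longrightarrow> msign k = (-1::'a::ring_1)"
  by (simp add: msign_def)

lemma msign_comm: "msign k * x = x * (msign k :: 'a::ring_1)"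
  by (cases "even k") (simp_all add: msign_even msign_odd)

lemma msign_cong: "even a = even b \<Longrightarrow> msign a = (msign b :: 'a::ring_1)"
  by (cases "even a") (simp_all add: msign_even msign_odd)

lemma msign_sq: "msign k * msign k = (1 :: 'a::ring_1)"
  by (cases "even k") (simp_all add: msign_even msign_odd)

definition sg :: "(nat \<Rightarrow> int) \<Rightarrow> nat \<Rightarrow> nat \<Rightarrow> nat \<Rightarrow> nat \<Rightarrow> nat \<Rightarrow> nat \<Rightarrow> 'a::ring_1" where
  "sg s a b c d f h = msign ((par s a + par s b + par s c + par s d) * (par s b + par s f + par s d + par s h)
               + (par s c + par s d) * (par s b + par s f))"

lemma sg_comm: "sg s a b c d f h * x = x * (sg s a b c d f h :: 'a::ring_1)"
  by (simp add: sg_def msign_comm)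

lemma tmul_sg: "tmul s \<kappa> X Y n m a f c h =
   (\<Sum>p\<le>n. \<Sum>q\<le>m. \<Sum>b\<in>{1..\<kappa>}. \<Sum>d\<in>{1..\<kappa>}. sg s a b c d f h * X p q a b c d * Y (n - p) (m - q) b f d h)"
  by (simp add: tmul_def sg_def)

lemma sg_cocycle: "(sg s a b c d f h * sg s a f c h g k :: 'a::ring_1) = sg s b f d h g k * sg s a b c d g k"
  unfolding sg_def msign_add[symmetric]
  by (rule msign_cong) (simp add: even_add even_mult_iff, blast)

lemma tmul_assoc: "tmul s \<kappa> (tmul s \<kappa> X Y) Z = tmul s \<kappa> X (tmul s \<kappa> Y Z)"
proof (intro ext)
  fix n m a g c k
  let ?R = "{1..\<kappa>}"
  define T where "T i1 i2 i3 j1 j2 j3 b d f h =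
     sg s a f c h g k * (sg s a b c d f h * X i1 j1 a b c d * Y i2 j2 b f d h) * Z i3 j3 f g h k"
    for i1 i2 i3 j1 j2 j3 b d f h
  have L: "tmul s \<kappa> (tmul s \<kappa> X Y) Z n m a g c k =
     (\<Sum>p\<le>n. \<Sum>i\<le>p. \<Sum>q\<le>m. \<Sum>j\<le>q. \<Sum>b\<in>?R. \<Sum>d\<in>?R. \<Sum>f\<in>?R. \<Sum>h\<in>?R. T i (p - i) (n - p) j (q - j) (m - q) b d f h)"
  proof -
    have "tmul s \<kappa> (tmul s \<kappa> X Y) Z n m a g c k =
     (\<Sum>p\<le>n. \<Sum>q\<le>m. \<Sum>f\<in>?R. \<Sum>h\<in>?R. \<Sum>i\<le>p. \<Sum>j\<le>q. \<Sum>b\<in>?R. \<Sum>d\<in>?R. T i (p - i) (n - p) j (q - j) (m - q) b d f h)"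
      unfolding tmul_sg T_def by (simp only: sum_distrib_left sum_distrib_right)
    also have "\<dots> = (\<Sum>p\<le>n. \<Sum>q\<le>m. \<Sum>i\<le>p. \<Sum>j\<le>q. \<Sum>f\<in>?R. \<Sum>h\<in>?R. \<Sum>b\<in>?R. \<Sum>d\<in>?R. T i (p - i) (n - p) j (q - j) (m - q) b d f h)"
      by (intro sum.cong refl swap22)
    also have "\<dots> = (\<Sum>p\<le>n. \<Sum>q\<le>m. \<Sum>i\<le>p. \<Sum>j\<le>q. \<Sum>b\<in>?R. \<Sum>d\<in>?R. \<Sum>f\<in>?R. \<Sum>h\<in>?R. T i (p - i) (n - p) j (q - j) (m - q) b d f h)"
      by (intro sum.cong refl swap22)
    also have "\<dots> = (\<Sum>p\<le>n. \<Sum>i\<le>p. \<Sum>q\<le>m. \<Sum>j\<le>q. \<Sum>b\<in>?R. \<Sum>d\<in>?R. \<Sum>f\<in>?R. \<Sum>h\<in>?R. T i (p - i) (n - p) j (q - j) (m - q) b d f h)"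
      by (intro sum.cong refl sum.swap)
    finally show ?thesis .
  qed
  have R: "tmul s \<kappa> X (tmul s \<kappa> Y Z) n m a g c k =
     (\<Sum>i\<le>n. \<Sum>i2\<le>n - i. \<Sum>j\<le>m. \<Sum>j2\<le>m - j. \<Sum>b\<in>?R. \<Sum>d\<in>?R. \<Sum>f\<in>?R. \<Sum>h\<in>?R. T i i2 (n - i - i2) j j2 (m - j - j2) b d f h)"
  proof -
    have "tmul s \<kappa> X (tmul s \<kappa> Y Z) n m a g c k =
     (\<Sum>i\<le>n. \<Sum>j\<le>m. \<Sum>b\<in>?R. \<Sum>d\<in>?R. \<Sum>i2\<le>n - i. \<Sum>j2\<le>m - j. \<Sum>f\<in>?R. \<Sum>h\<in>?R.
        sg s a b c d g k * X i j a b c d * (sg s b f d h g k * Y i2 j2 b f d h * Z (n - i - i2) (m - j - j2) f g h k))"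
      unfolding tmul_sg by (simp only: sum_distrib_left sum_distrib_right diff_diff_left)
    also have "\<dots> = (\<Sum>i\<le>n. \<Sum>j\<le>m. \<Sum>b\<in>?R. \<Sum>d\<in>?R. \<Sum>i2\<le>n - i. \<Sum>j2\<le>m - j. \<Sum>f\<in>?R. \<Sum>h\<in>?R.
        T i i2 (n - i - i2) j j2 (m - j - j2) b d f h)"
    proof (intro sum.cong refl)
      fix i j b d i2 j2 f h
      show "sg s a b c d g k * X i j a b c d * (sg s b f d h g k * Y i2 j2 b f d h * Z (n - i - i2) (m - j - j2) f g h k)
          = T i i2 (n - i - i2) j j2 (m - j - j2) b d f h"
      proof -
        let ?u = "sg s b f d h g k :: 'a" and ?v = "sg s a b c d g k :: 'a"
          and ?w = "sg s a f c h g k :: 'a" and ?z = "sg s a b c d f h :: 'a"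
        have "?v * X i j a b c d * (?u * Y i2 j2 b f d h * Z (n - i - i2) (m - j - j2) f g h k)
            = ?v * (X i j a b c d * ?u) * Y i2 j2 b f d h * Z (n - i - i2) (m - j - j2) f g h k"
          by (simp add: mult.assoc)
        also have "\<dots> = (?v * ?u) * (X i j a b c d * Y i2 j2 b f d h * Z (n - i - i2) (m - j - j2) f g h k)"
          by (subst sg_comm[of s b f d h g k "X i j a b c d", symmetric]) (simp add: mult.assoc)
        also have "?v * ?u = ?w * ?z"
          using sg_cocycle[of s a b c d f h g k] sg_comm[of s a b c d g k "sg s b f d h g k"]
            sg_comm[of s a b c d f h "sg s a f c h g k"] by metis
        also have "?w * ?z * (X i j a b c d * Y i2 j2 b f d h * Z (n - i - i2) (m - j - j2) f g h k)
           = T i i2 (n - i - i2) j j2 (m - j - j2) b d f h"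
          unfolding T_def by (simp add: mult.assoc)
        finally show ?thesis .
      qed
    qed
    also have "\<dots> = (\<Sum>i\<le>n. \<Sum>j\<le>m. \<Sum>i2\<le>n - i. \<Sum>j2\<le>m - j. \<Sum>b\<in>?R. \<Sum>d\<in>?R. \<Sum>f\<in>?R. \<Sum>h\<in>?R.
        T i i2 (n - i - i2) j j2 (m - j - j2) b d f h)"
      by (intro sum.cong refl swap22)
    also have "\<dots> = (\<Sum>i\<le>n. \<Sum>i2\<le>n - i. \<Sum>j\<le>m. \<Sum>j2\<le>m - j. \<Sum>b\<in>?R. \<Sum>d\<in>?R. \<Sum>f\<in>?R. \<Sum>h\<in>?R. T i i2 (n - i - i2) j j2 (m - j - j2) b d f h)"
      by (intro sum.cong refl sum.swap)
    finally show ?thesis .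
  qed
  show "tmul s \<kappa> (tmul s \<kappa> X Y) Z n m a g c k = tmul s \<kappa> X (tmul s \<kappa> Y Z) n m a g c k"
    unfolding L R
    apply (subst cauchy3[where F="\<lambda>i i2 i3. \<Sum>q\<le>m. \<Sum>j\<le>q. \<Sum>b\<in>?R. \<Sum>d\<in>?R. \<Sum>f\<in>?R. \<Sum>h\<in>?R. T i i2 i3 j (q - j) (m - q) b d f h"])
    apply (rule sum.cong[OF refl])
    apply (rule sum.cong[OF refl])
    apply (rule cauchy3)
    done
qed

definition trunc :: "nat \<Rightarrow> 'a::ring_1 tser \<Rightarrow> 'a tser" where
  "trunc \<kappa> X n m a b c d = (if a \<in> {1..\<kappa>} \<and> b \<in> {1..\<kappa>} \<and> c \<in> {1..\<kappa>} \<and> d \<in> {1..\<kappa>} then X n m a b c d else 0)"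

definition tm :: "(nat \<Rightarrow> int) \<Rightarrow> nat \<Rightarrow> 'a::ring_1 tser \<Rightarrow> 'a tser \<Rightarrow> 'a tser" where
  "tm s \<kappa> X Y = tmul s \<kappa> (trunc \<kappa> X) (trunc \<kappa> Y)"

definition sh :: "nat \<Rightarrow> nat \<Rightarrow> 'a::ring_1 tser \<Rightarrow> 'a tser" where
  "sh n0 m0 X n m a b c d = (if n0 \<le> n \<and> m0 \<le> m then X (n - n0) (m - m0) a b c d else 0)"

lemma trunc_trunc[simp]: "trunc \<kappa> (trunc \<kappa> X) = trunc \<kappa> X"
  by (simp add: trunc_def fun_eq_iff)

lemma trunc_tmul: "trunc \<kappa> (tmul s \<kappa> X Y) = tm s \<kappa> X Y"
  unfolding tm_def
proof (intro ext)
  fix n m a f c h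
  show "trunc \<kappa> (tmul s \<kappa> X Y) n m a f c h = tmul s \<kappa> (trunc \<kappa> X) (trunc \<kappa> Y) n m a f c h"
  proof (cases "a \<in> {1..\<kappa>} \<and> f \<in> {1..\<kappa>} \<and> c \<in> {1..\<kappa>} \<and> h \<in> {1..\<kappa>}")
    case True
    then show ?thesis unfolding tmul_sg trunc_def
      by (auto intro!: sum.cong)
  next
    case False
    then show ?thesis unfolding tmul_sg trunc_def
      by (auto intro!: sum.neutral)
  qed
qed

lemma trunc_tm[simp]: "trunc \<kappa> (tm s \<kappa> X Y) = tm s \<kappa> X Y"
  by (metis tm_def trunc_tmul trunc_trunc)

lemma tm_trunc_l[simp]: "tm s \<kappa> (trunc \<kappa> X) Y = tm s \<kappa> X Y"
  by (simp add: tm_def)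

lemma tm_trunc_r[simp]: "tm s \<kappa> X (trunc \<kappa> Y) = tm s \<kappa> X Y"
  by (simp add: tm_def)

lemma tm_assoc: "tm s \<kappa> (tm s \<kappa> X Y) Z = tm s \<kappa> X (tm s \<kappa> Y Z)"
  by (metis tm_def trunc_tm tmul_assoc)

lemma tmul_tadd_l: "tmul s \<kappa> (tadd X Y) Z = tadd (tmul s \<kappa> X Z) (tmul s \<kappa> Y Z)"
  by (simp add: fun_eq_iff tmul_sg tadd_def distrib_left distrib_right sum.distrib)

lemma tmul_tadd_r: "tmul s \<kappa> X (tadd Y Z) = tadd (tmul s \<kappa> X Y) (tmul s \<kappa> X Z)"
  by (simp add: fun_eq_iff tmul_sg tadd_def distrib_left distrib_right sum.distrib)

lemma tmul_tsub_l: "tmul s \<kappa> (tsub X Y) Z = tsub (tmul s \<kappa> X Z) (tmul s \<kappa> Y Z)"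
  by (simp add: fun_eq_iff tmul_sg tsub_def left_diff_distrib right_diff_distrib sum_subtractf)

lemma tmul_tsub_r: "tmul s \<kappa> X (tsub Y Z) = tsub (tmul s \<kappa> X Y) (tmul s \<kappa> X Z)"
  by (simp add: fun_eq_iff tmul_sg tsub_def left_diff_distrib right_diff_distrib sum_subtractf)

lemma trunc_tadd: "trunc \<kappa> (tadd X Y) = tadd (trunc \<kappa> X) (trunc \<kappa> Y)"
  by (simp add: fun_eq_iff trunc_def tadd_def)

lemma trunc_tsub: "trunc \<kappa> (tsub X Y) = tsub (trunc \<kappa> X) (trunc \<kappa> Y)"
  by (simp add: fun_eq_iff trunc_def tsub_def)

lemma tm_tadd_l: "tm s \<kappa> (tadd X Y) Z = tadd (tm s \<kappa> X Z) (tm s \<kappa> Y Z)"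
  by (simp add: tm_def trunc_tadd tmul_tadd_l)
lemma tm_tadd_r: "tm s \<kappa> X (tadd Y Z) = tadd (tm s \<kappa> X Y) (tm s \<kappa> X Z)"
  by (simp add: tm_def trunc_tadd tmul_tadd_r)
lemma tm_tsub_l: "tm s \<kappa> (tsub X Y) Z = tsub (tm s \<kappa> X Z) (tm s \<kappa> Y Z)"
  by (simp add: tm_def trunc_tsub tmul_tsub_l)
lemma tm_tsub_r: "tm s \<kappa> X (tsub Y Z) = tsub (tm s \<kappa> X Y) (tm s \<kappa> X Z)"
  by (simp add: tm_def trunc_tsub tmul_tsub_r)

lemma sg_same: "sg s a a c c f h = 1"
  by (simp add: sg_def msign_even)

lemma sg_same2: "sg s a f c h f h = 1"
  by (simp add: sg_def msign_even)

lemma if_and0: "(if A \<and> B then x else 0) = (if A then (if B then x else 0) else 0)"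
  by simp

lemma sum_if_const: "(\<Sum>x\<in>A. if P then f x else 0) = (if P then (\<Sum>x\<in>A. f x) else (0::'b::comm_monoid_add))"
  by simp

lemma collapse4:
  fixes n m :: nat
  assumes "\<And>p q b d. p \<le> n \<Longrightarrow> q \<le> m \<Longrightarrow> b \<in> R \<Longrightarrow> d \<in> R \<Longrightarrow>
      G p q b d = (if p = pp \<and> q = qq \<and> b = bb \<and> d = dd then T else 0)" and "finite R"
  shows "(\<Sum>p\<le>n. \<Sum>q\<le>m. \<Sum>b\<in>R. \<Sum>d\<in>R. G p q b d) = (if pp \<le> n \<and> qq \<le> m \<and> bb \<in> R \<and> dd \<in> R then T else (0::'b::comm_monoid_add))"
proof -
  have "(\<Sum>p\<le>n. \<Sum>q\<le>m. \<Sum>b\<in>R. \<Sum>d\<in>R. G p q b d) =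
     (\<Sum>p\<le>n. \<Sum>q\<le>m. \<Sum>b\<in>R. \<Sum>d\<in>R. if p = pp \<and> q = qq \<and> b = bb \<and> d = dd then T else 0)"
    by (intro sum.cong refl) (simp add: assms(1))
  also have "\<dots> = (if pp \<le> n \<and> qq \<le> m \<and> bb \<in> R \<and> dd \<in> R then T else 0)"
    using assms(2) by (simp only: if_and0 sum_if_const) (simp add: sum.delta sum.delta' cong: if_cong)
  finally show ?thesis .
qed

lemma tm_Id_l: "tm s \<kappa> (tconst n0 m0 Id2) X = sh n0 m0 (trunc \<kappa> X)"
proof (intro ext)
  fix n m a f c h
  show "tm s \<kappa> (tconst n0 m0 Id2) X n m a f c h = sh n0 m0 (trunc \<kappa> X) n m a f c h"
    unfolding tm_def tmul_sg
    apply (subst collapse4[where pp=n0 and qq=m0 and bb=a and dd=c and T="if a \<in> {1..\<kappa>} \<and> c \<in> {1..\<kappa>} then trunc \<kappa> X (n - n0) (m - m0) a f c h else 0"])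
    apply (auto simp: trunc_def tconst_def Id2_def sh_def sg_same)
    done
qed

lemma tm_Id_r: "tm s \<kappa> X (tconst n0 m0 Id2) = sh n0 m0 (trunc \<kappa> X)"
proof (intro ext)
  fix n m a f c h
  show "tm s \<kappa> X (tconst n0 m0 Id2) n m a f c h = sh n0 m0 (trunc \<kappa> X) n m a f c h"
    unfolding tm_def tmul_sg
    apply (subst collapse4[where pp="n - n0" and qq="m - m0" and bb=f and dd=h and T="if n0 \<le> n \<and> m0 \<le> m \<and> f \<in> {1..\<kappa>} \<and> h \<in> {1..\<kappa>} then trunc \<kappa> X (n - n0) (m - m0) a f c h else 0"])
    apply (auto simp: trunc_def tconst_def Id2_def sh_def sg_same2)
    done
qed

lemma tm_P_l: "tm s \<kappa> (tconst n0 m0 (Pmat s)) X n m a f c h =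
  (if n0 \<le> n \<and> m0 \<le> m \<and> a \<in> {1..\<kappa>} \<and> c \<in> {1..\<kappa>} then sg s a c c a f h * of_int (s c) * trunc \<kappa> X (n - n0) (m - m0) c f a h else 0)"
  unfolding tm_def tmul_sg
  apply (subst collapse4[where pp="n0" and qq="m0" and bb=c and dd=a and T="if a \<in> {1..\<kappa>} \<and> c \<in> {1..\<kappa>} then sg s a c c a f h * of_int (s c) * trunc \<kappa> X (n - n0) (m - m0) c f a h else 0"])
    apply (auto simp: trunc_def tconst_def Pmat_def)
  done

lemma tm_P_r: "tm s \<kappa> X (tconst n0 m0 (Pmat s)) n m a f c h =
  (if n0 \<le> n \<and> m0 \<le> m \<and> f \<in> {1..\<kappa>} \<and> h \<in> {1..\<kappa>} then sg s a h c f f h * trunc \<kappa> X (n - n0) (m - m0) a h c f * of_int (s f) else 0)"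
  unfolding tm_def tmul_sg
  apply (subst collapse4[where pp="n - n0" and qq="m - m0" and bb=h and dd=f and T="if n0 \<le> n \<and> m0 \<le> m \<and> f \<in> {1..\<kappa>} \<and> h \<in> {1..\<kappa>} then sg s a h c f f h * trunc \<kappa> X (n - n0) (m - m0) a h c f * of_int (s f) else 0"])
    apply (auto simp: trunc_def tconst_def Pmat_def)
  done

lemma perm4:
  fixes u v w :: "'a::ring_1"
  assumes cu: "\<And>x. u * x = x * u" and cv: "\<And>x. v * x = x * v"
  shows "w * (u * X) * (v * Y) = (u * v) * (w * X * Y)"
proof -
  have "w * (u * X) * (v * Y) = w * u * (X * v) * Y" by (simp add: mult.assoc)
  also have "\<dots> = u * w * (v * X) * Y" using cu[of w] cv[of X] by simp
  also have "\<dots> = u * (w * v) * X * Y" by (simp add: mult.assoc)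
  also have "\<dots> = u * v * w * X * Y" using cv[of w] by (simp add: mult.assoc)
  finally show ?thesis by (simp add: mult.assoc)
qed

definition sig :: "'a::ring_1 tser \<Rightarrow> 'a tser" where
  "sig X n m a b c d = (if m = 0 then (\<Sum>p\<le>n. msign (n - p) * X p (n - p) a b c d) else 0)"

lemma sig_trunc: "sig (trunc \<kappa> X) = trunc \<kappa> (sig X)"
  by (intro ext) (auto simp: sig_def trunc_def)

lemma sig_tadd: "sig (tadd X Y) = tadd (sig X) (sig Y)"
  by (simp add: fun_eq_iff sig_def tadd_def distrib_left sum.distrib)

lemma sig_tsub: "sig (tsub X Y) = tsub (sig X) (sig Y)"
  by (simp add: fun_eq_iff sig_def tsub_def right_diff_distrib sum_subtractf)

lemma sig_tconst: "sig (tconst n0 m0 M) = tconst (n0 + m0) 0 (\<lambda>a b c d. msign m0 * M a b c d)"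
proof (intro ext)
  fix n m a b c d
  have "(\<Sum>p\<le>n. msign (n - p) * tconst n0 m0 M p (n - p) a b c d) =
        (\<Sum>p\<le>n. if p = n0 then (if n = n0 + m0 then msign m0 * M a b c d else 0) else 0)"
    by (intro sum.cong refl) (auto simp: tconst_def)
  also have "\<dots> = (if n = n0 + m0 then msign m0 * M a b c d else 0)"
    by (simp add: sum.delta)
  finally have S: "(\<Sum>p\<le>n. msign (n - p) * tconst n0 m0 M p (n - p) a b c d) = (if n = n0 + m0 then msign m0 * M a b c d else 0)" .
  show "sig (tconst n0 m0 M) n m a b c d = tconst (n0 + m0) 0 (\<lambda>a b c d. msign m0 * M a b c d) n m a b c d"
    unfolding sig_def by (simp only: S) (simp add: tconst_def)
qed

lemma sig_tmul: "sig (tmul s \<kappa> X Y) = tmul s \<kappa> (sig X) (sig Y)"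
proof (intro ext)
  fix n m a f c h
  let ?R = "{1..\<kappa>}"
  define W where "W i1 j1 i2 j2 = (\<Sum>b\<in>?R. \<Sum>d\<in>?R. sg s a b c d f h * X i1 j1 a b c d * Y i2 j2 b f d h)" for i1 j1 i2 j2
  define F where "F i1 j1 i2 = msign (n - i1 - i2) * W i1 j1 i2 (n - i1 - j1 - i2)" for i1 j1 i2
  show "sig (tmul s \<kappa> X Y) n m a f c h = tmul s \<kappa> (sig X) (sig Y) n m a f c h"
  proof (cases "m = 0")
    case False
    have "tmul s \<kappa> (sig X) (sig Y) n m a f c h = 0"
      unfolding tmul_sg
      by (intro sum.neutral ballI) (use False in \<open>auto simp: sig_def\<close>)
    then show ?thesis using False by (simp add: sig_def)
  next
    case True
    have L: "sig (tmul s \<kappa> X Y) n m a f c h = (\<Sum>i\<le>n. \<Sum>j1\<le>n - i. \<Sum>j\<le>n - i - j1. F i j1 j)"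
    proof -
      have "sig (tmul s \<kappa> X Y) n m a f c h = (\<Sum>k\<le>n. \<Sum>p\<le>k. \<Sum>q\<le>n - k. msign (n - k) * W p q (k - p) (n - k - q))"
        using True unfolding sig_def tmul_sg W_def by (simp add: sum_distrib_left)
      also have "\<dots> = (\<Sum>k\<le>n. \<Sum>p\<le>k. \<Sum>q\<le>n - k. F p q (k - p))"
        unfolding F_def by (intro sum.cong refl) (auto simp: diff_diff_left ac_simps)
      also have "\<dots> = (\<Sum>i\<le>n. \<Sum>t\<le>n - i. \<Sum>q\<le>n - i - t. F i q t)"
        by (rule cauchy3[where F="\<lambda>i t r. \<Sum>q\<le>r. F i q t"])
      also have "\<dots> = (\<Sum>i\<le>n. \<Sum>q\<le>n - i. \<Sum>t\<le>n - i - q. F i q t)"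
        by (rule sum.cong[OF refl], rule tri_swap)
      finally show ?thesis .
    qed
    have R: "tmul s \<kappa> (sig X) (sig Y) n m a f c h = (\<Sum>i\<le>n. \<Sum>j1\<le>n - i. \<Sum>j\<le>n - i - j1. F i j1 j)"
    proof -
      have "tmul s \<kappa> (sig X) (sig Y) n m a f c h =
         (\<Sum>p\<le>n. \<Sum>b\<in>?R. \<Sum>d\<in>?R. sg s a b c d f h * (\<Sum>i\<le>p. msign (p - i) * X i (p - i) a b c d) *
              (\<Sum>j\<le>n - p. msign (n - p - j) * Y j (n - p - j) b f d h))"
        using True unfolding tmul_sg sig_def by simp
      also have "\<dots> = (\<Sum>p\<le>n. \<Sum>i\<le>p. \<Sum>j\<le>n - p. \<Sum>b\<in>?R. \<Sum>d\<in>?R.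
           (msign (p - i) * msign (n - p - j)) * (sg s a b c d f h * X i (p - i) a b c d * Y j (n - p - j) b f d h))"
      proof (rule sum.cong[OF refl])
        fix p assume "p \<in> {..n}"
        show "(\<Sum>b\<in>?R. \<Sum>d\<in>?R. sg s a b c d f h * (\<Sum>i\<le>p. msign (p - i) * X i (p - i) a b c d) *
              (\<Sum>j\<le>n - p. msign (n - p - j) * Y j (n - p - j) b f d h)) =
           (\<Sum>i\<le>p. \<Sum>j\<le>n - p. \<Sum>b\<in>?R. \<Sum>d\<in>?R.
           (msign (p - i) * msign (n - p - j)) * (sg s a b c d f h * X i (p - i) a b c d * Y j (n - p - j) b f d h))"
        proof -
          have "(\<Sum>b\<in>?R. \<Sum>d\<in>?R. sg s a b c d f h * (\<Sum>i\<le>p. msign (p - i) * X i (p - i) a b c d) *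
              (\<Sum>j\<le>n - p. msign (n - p - j) * Y j (n - p - j) b f d h)) =
            (\<Sum>b\<in>?R. \<Sum>d\<in>?R. \<Sum>i\<le>p. \<Sum>j\<le>n - p. sg s a b c d f h * (msign (p - i) * X i (p - i) a b c d) *
              (msign (n - p - j) * Y j (n - p - j) b f d h))"
            by (simp only: sum_distrib_left sum_distrib_right, rule sum.cong[OF refl], rule sum.cong[OF refl], rule sum.swap)
          also have "\<dots> = (\<Sum>i\<le>p. \<Sum>j\<le>n - p. \<Sum>b\<in>?R. \<Sum>d\<in>?R. sg s a b c d f h * (msign (p - i) * X i (p - i) a b c d) *
              (msign (n - p - j) * Y j (n - p - j) b f d h))"
            by (rule swap22)
          also have "\<dots> = (\<Sum>i\<le>p. \<Sum>j\<le>n - p. \<Sum>b\<in>?R. \<Sum>d\<in>?R.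
           (msign (p - i) * msign (n - p - j)) * (sg s a b c d f h * X i (p - i) a b c d * Y j (n - p - j) b f d h))"
            by (intro sum.cong refl perm4 msign_comm)
          finally show ?thesis .
        qed
      qed
      also have "\<dots> = (\<Sum>p\<le>n. \<Sum>i\<le>p. \<Sum>j\<le>n - p. F i (p - i) j)"
        unfolding F_def W_def
        by (intro sum.cong refl) (auto simp: sum_distrib_left msign_add[symmetric] diff_diff_left)
      also have "\<dots> = (\<Sum>i\<le>n. \<Sum>j1\<le>n - i. \<Sum>j\<le>n - i - j1. F i j1 j)"
        by (rule cauchy3[where F="\<lambda>i j1 r. \<Sum>j\<le>r. F i j1 j"])
      finally show ?thesis .
    qed
    show ?thesis using L R by simp
  qed
qed

definition negx :: "'a::ring_1 tser \<Rightarrow> 'a tser" where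
  "negx X n m a b c d = msign n * X n m a b c d"

lemma negx_negx[simp]: "negx (negx X) = X"
  by (simp add: fun_eq_iff negx_def mult.assoc[symmetric] msign_sq)

lemma negx_trunc: "negx (trunc \<kappa> X) = trunc \<kappa> (negx X)"
  by (simp add: fun_eq_iff negx_def trunc_def)

lemma negx_tadd: "negx (tadd X Y) = tadd (negx X) (negx Y)"
  by (simp add: fun_eq_iff negx_def tadd_def distrib_left)

lemma negx_tsub: "negx (tsub X Y) = tsub (negx X) (negx Y)"
  by (simp add: fun_eq_iff negx_def tsub_def right_diff_distrib)

lemma negx_tconst: "negx (tconst n0 m0 M) = tconst n0 m0 (\<lambda>a b c d. msign n0 * M a b c d)"
  by (simp add: fun_eq_iff negx_def tconst_def)

lemma negx_tmul: "negx (tmul s \<kappa> X Y) = tmul s \<kappa> (negx X) (negx Y)"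
proof (intro ext)
  fix n m a f c h
  show "negx (tmul s \<kappa> X Y) n m a f c h = tmul s \<kappa> (negx X) (negx Y) n m a f c h"
    unfolding negx_def tmul_sg sum_distrib_left
  proof (intro sum.cong refl)
    fix p q b d assume "p \<in> {..n}"
    then have "msign n = (msign p * msign (n - p) :: 'a)" by (simp add: msign_add[symmetric])
    then show "msign n * (sg s a b c d f h * X p q a b c d * Y (n - p) (m - q) b f d h) =
          sg s a b c d f h * (msign p * X p q a b c d) * (msign (n - p) * Y (n - p) (m - q) b f d h)"
      by (simp only: perm4[OF msign_comm msign_comm])
  qed
qed

lemma negx_tm: "negx (tm s \<kappa> X Y) = tm s \<kappa> (negx X) (negx Y)"
  by (simp add: tm_def negx_tmul negx_trunc)

lemma sig_tm: "sig (tm s \<kappa> X Y) = tm s \<kappa> (sig X) (sig Y)"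
  by (simp add: tm_def sig_tmul sig_trunc)

lemma trunc_sh: "trunc \<kappa> (sh k l X) = sh k l (trunc \<kappa> X)"
  by (simp add: fun_eq_iff sh_def trunc_def)

lemma sh_sh: "sh k l (sh k' l' X) = sh (k + k') (l + l') X"
  by (auto simp: fun_eq_iff sh_def diff_diff_left ac_simps)

lemma sh_00: "sh 0 0 X = X"
  by (simp add: fun_eq_iff sh_def)

lemma sh_tadd: "sh k l (tadd X Y) = tadd (sh k l X) (sh k l Y)"
  by (intro ext) (simp add: sh_def tadd_def)

lemma sh_tsub: "sh k l (tsub X Y) = tsub (sh k l X) (sh k l Y)"
  by (intro ext) (simp add: sh_def tsub_def)

lemma sh_inj: "sh k l X = sh k l Y \<Longrightarrow> X = Y"
proof (intro ext)
  fix n m a b c d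
  assume "sh k l X = sh k l Y"
  then have "sh k l X (n + k) (m + l) a b c d = sh k l Y (n + k) (m + l) a b c d" by simp
  then show "X n m a b c d = Y n m a b c d" by (simp add: sh_def)
qed

lemma tm_sh_l: "tm s \<kappa> (sh k l X) Y = sh k l (tm s \<kappa> X Y)"
proof -
  have "tm s \<kappa> (sh k l X) Y = tm s \<kappa> (trunc \<kappa> (sh k l X)) Y" by simp
  also have "\<dots> = tm s \<kappa> (tm s \<kappa> (tconst k l Id2) X) Y" by (simp add: trunc_sh tm_Id_l)
  also have "\<dots> = sh k l (tm s \<kappa> X Y)" by (simp only: tm_assoc) (simp add: tm_Id_l)
  finally show ?thesis .
qed

lemma tm_sh_r: "tm s \<kappa> X (sh k l Y) = sh k l (tm s \<kappa> X Y)"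
proof -
  have "tm s \<kappa> X (sh k l Y) = tm s \<kappa> X (trunc \<kappa> (sh k l Y))" by simp
  also have "\<dots> = tm s \<kappa> X (tm s \<kappa> (tconst k l Id2) Y)" by (simp add: trunc_sh tm_Id_l)
  also have "\<dots> = tm s \<kappa> (sh k l (trunc \<kappa> X)) Y" by (simp add: tm_assoc[symmetric] tm_Id_r)
  also have "\<dots> = sh k l (tm s \<kappa> X Y)" by (simp add: tm_sh_l)
  finally show ?thesis .
qed

lemma tconst_sh: "tconst k l M = sh k l (tconst 0 0 M)"
  by (intro ext) (auto simp: sh_def tconst_def)

lemma tm_tconst_l: "tm s \<kappa> (tconst k l M) X = sh k l (tm s \<kappa> (tconst 0 0 M) X)"
  by (subst tconst_sh) (rule tm_sh_l)

lemma tm_tconst_r: "tm s \<kappa> X (tconst k l M) = sh k l (tm s \<kappa> X (tconst 0 0 M))"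
  by (subst tconst_sh) (rule tm_sh_r)

lemma tm_I_l: "tm s \<kappa> (tconst 0 0 Id2) X = trunc \<kappa> X"
  by (simp add: tm_Id_l sh_00)

lemma tm_I_r: "tm s \<kappa> X (tconst 0 0 Id2) = trunc \<kappa> X"
  by (simp add: tm_Id_r sh_00)

lemma par_sign:
  assumes "s i = 1 \<or> s i = -1"
  shows "(of_int (s i) :: 'a::ring_1) = msign (par s i)"
  using assms by (auto simp: par_def msign_def)


lemma tm_PP:
  assumes spm: "\<forall>i\<in>{1..\<kappa>}. s i = 1 \<or> s i = -1"
  shows "tm s \<kappa> (tconst 0 0 (Pmat s)) (tconst 0 0 (Pmat s)) = (trunc \<kappa> (tconst 0 0 Id2) :: 'a::ring_1 tser)"
proof (intro ext)
  fix n m a f c h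
  show "tm s \<kappa> (tconst 0 0 (Pmat s)) (tconst 0 0 (Pmat s)) n m a f c h = (trunc \<kappa> (tconst 0 0 Id2) n m a f c h :: 'a)"
  proof (cases "n = 0 \<and> m = 0 \<and> a \<in> {1..\<kappa>} \<and> c \<in> {1..\<kappa>} \<and> f = a \<and> h = c")
    case True
    have "sg s a c c a a c * of_int (s c) * of_int (s a) = (1::'a)"
    proof -
      have "sg s a c c a a c * of_int (s c) * of_int (s a) = (msign ((par s a + par s c + par s c + par s a) * (par s c + par s a + par s a + par s c)
           + (par s c + par s a) * (par s c + par s a) + par s c + par s a) :: 'a)"
        using True spm by (simp add: sg_def par_sign msign_add)
      also have "\<dots> = 1" by (rule msign_even) (cases "even (par s a)"; cases "even (par s c)"; simp)
      finally show ?thesis .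
    qed
    then show ?thesis using True
      by (simp add: tm_P_l trunc_def tconst_def Pmat_def Id2_def)
  next
    case False
    then show ?thesis
      by (auto simp: tm_P_l trunc_def tconst_def Pmat_def Id2_def)
  qed
qed

lemma tm_tmul_l: "tm s \<kappa> (tmul s \<kappa> A B) Y = tm s \<kappa> (tm s \<kappa> A B) Y"
  by (metis tm_trunc_l trunc_tmul)

lemma RE_tm:
  assumes "reflection_eq \<kappa> s eps b"
  shows "tm s \<kappa> (tm s \<kappa> (tm s \<kappa> (Rminus s) (B1 s eps b)) (Rplus s)) (B2 s eps b)
       = tm s \<kappa> (tm s \<kappa> (tm s \<kappa> (B2 s eps b) (Rplus s)) (B1 s eps b)) (Rminus s)"
proof -
  have "trunc \<kappa> (tmul s \<kappa> (tmul s \<kappa> (tmul s \<kappa> (Rminus s) (B1 s eps b)) (Rplus s)) (B2 s eps b))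
      = trunc \<kappa> (tmul s \<kappa> (tmul s \<kappa> (tmul s \<kappa> (B2 s eps b) (Rplus s)) (B1 s eps b)) (Rminus s))"
    using assms unfolding reflection_eq_def by (intro ext) (simp add: trunc_def)
  then show ?thesis by (simp add: trunc_tmul tm_tmul_l)
qed

lemma sig_B1: "sig (B1 s eps b) = B1 s eps b"
proof (intro ext)
  fix n m a f c h
  show "sig (B1 s eps b) n m a f c h = B1 s eps b n m a f c h"
  proof (cases "m = 0")
    case True
    have "(\<Sum>p\<le>n. msign (n - p) * B1 s eps b p (n - p) a f c h) = (\<Sum>p\<le>n. if p = n then B1 s eps b n 0 a f c h else 0)"
      by (intro sum.cong refl) (auto simp: B1_def msign_def)
    then show ?thesis using True by (simp add: sig_def)
  next
    case False
    then show ?thesis by (simp add: sig_def B1_def)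
  qed
qed

lemma sig_B2: "sig (B2 s eps b) n m a a' k l =
   (if m = 0 \<and> a = a' then msign n * (msign (par s k * par s l + par s l) * bser b eps k l n) else 0)"
proof (cases "m = 0")
  case True
  have "(\<Sum>p\<le>n. msign (n - p) * B2 s eps b p (n - p) a a' k l) =
       (\<Sum>p\<le>n. if p = 0 then msign n * B2 s eps b 0 n a a' k l else 0)"
    by (intro sum.cong refl) (auto simp: B2_def)
  then show ?thesis using True by (simp add: sig_def B2_def)
next
  case False
  then show ?thesis by (simp add: sig_def)
qed

lemma negx_B2: "negx (B2 s eps b) = B2 s eps b"
  by (intro ext) (simp add: negx_def B2_def msign_def)

lemma sig_Rplus: "sig (Rplus s) = tconst 2 0 (Pmat s)"
  unfolding Rplus_def sig_tsub sig_tadd sig_tconst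
  by (intro ext) (simp add: tsub_def tadd_def tconst_def msign_def)

lemma sig_Rminus: "sig (Rminus s) = tsub (tconst 2 0 (Pmat s)) (tadd (tconst 1 0 Id2) (tconst 1 0 Id2))"
  unfolding Rminus_def sig_tsub sig_tadd sig_tconst
  by (intro ext) (simp add: tsub_def tadd_def tconst_def msign_def)

lemma swap_P_D2:
  "tm s \<kappa> (tconst 0 0 (Pmat s)) (sig (B2 s eps b)) = tm s \<kappa> (negx (B1 s eps b)) (tconst 0 0 (Pmat s))"
proof (intro ext)
  fix n m a f c h
  have e1: "sg s a f f a f h = 1" unfolding sg_def
    by (rule msign_even) (cases "even (par s a)"; cases "even (par s f)"; cases "even (par s h)"; simp)
  have e2: "sg s a h f f f h = 1" unfolding sg_def
    by (rule msign_even) (cases "even (par s a)"; cases "even (par s f)"; cases "even (par s h)"; simp)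
  show "tm s \<kappa> (tconst 0 0 (Pmat s)) (sig (B2 s eps b)) n m a f c h = tm s \<kappa> (negx (B1 s eps b)) (tconst 0 0 (Pmat s)) n m a f c h"
    by (auto simp: tm_P_l tm_P_r trunc_def sig_B2 negx_def B1_def e1 e2 mult_of_int_commute)
qed

lemma of_int_swap3: "x * y * of_int k = x * of_int k * (y::'a::ring_1)"
  by (simp add: mult.assoc mult_of_int_commute)

lemma swap_D2_P:
  assumes spm: "\<forall>i\<in>{1..\<kappa>}. s i = 1 \<or> s i = -1"
  shows "tm s \<kappa> (sig (B2 s eps b)) (tconst 0 0 (Pmat s)) = tm s \<kappa> (tconst 0 0 (Pmat s)) (negx (B1 s eps b))"
proof (intro ext)
  fix n m a f c h
  show "tm s \<kappa> (sig (B2 s eps b)) (tconst 0 0 (Pmat s)) n m a f c h = tm s \<kappa> (tconst 0 0 (Pmat s)) (negx (B1 s eps b)) n m a f c h"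
  proof (cases "m = 0 \<and> a = h \<and> a \<in> {1..\<kappa>} \<and> f \<in> {1..\<kappa>} \<and> c \<in> {1..\<kappa>}")
    case True
    then have ha: "h = a" and inR: "c \<in> {1..\<kappa>}" "f \<in> {1..\<kappa>}" by auto
    have e: "sg s a a c f f a * of_int (s f) = (sg s a c c a f a * of_int (s c) :: 'a)"
      using inR spm unfolding sg_def
      by (simp add: par_sign msign_add[symmetric], intro msign_cong)
         (cases "even (par s a)"; cases "even (par s c)"; cases "even (par s f)"; simp)
    let ?V = "msign n * (msign (par s c * par s f + par s f) * bser b eps c f n) :: 'a"
    have "tm s \<kappa> (sig (B2 s eps b)) (tconst 0 0 (Pmat s)) n m a f c h = sg s a a c f f a * ?V * of_int (s f)"
      using True by (simp add: tm_P_r trunc_def sig_B2)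
    also have "\<dots> = sg s a c c a f a * of_int (s c) * ?V"
      by (simp only: of_int_swap3 e)
    also have "\<dots> = tm s \<kappa> (tconst 0 0 (Pmat s)) (negx (B1 s eps b)) n m a f c h"
      using True by (simp add: tm_P_l trunc_def negx_def B1_def)
    finally show ?thesis .
  next
    case False
    then show ?thesis
      by (auto simp: tm_P_l tm_P_r trunc_def sig_B2 negx_def B1_def)
  qed
qed

lemma E2:
  assumes spm: "\<forall>i\<in>{1..\<kappa>}. s i = 1 \<or> s i = -1"
    and RE: "reflection_eq \<kappa> s eps b"
  defines "Mm \<equiv> tsub (tconst 2 0 (Pmat s)) (tadd (tconst 1 0 Id2) (tconst 1 0 Id2))"
    and "P0 \<equiv> tconst 0 0 (Pmat s)"
    and "N1 \<equiv> negx (B1 s eps b)"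
  shows "tm s \<kappa> (tm s \<kappa> Mm (tm s \<kappa> (B1 s eps b) N1)) P0 = (tm s \<kappa> P0 (tm s \<kappa> (tm s \<kappa> N1 (B1 s eps b)) Mm) :: 'a::ring_1 tser)"
proof -
  let ?B1 = "B1 s eps b :: 'a tser" and ?D2 = "sig (B2 s eps b) :: 'a tser"
  have 1: "tm s \<kappa> (tm s \<kappa> (tm s \<kappa> Mm ?B1) (tconst 2 0 (Pmat s))) ?D2
       = tm s \<kappa> (tm s \<kappa> (tm s \<kappa> ?D2 (tconst 2 0 (Pmat s))) ?B1) Mm"
    using arg_cong[OF RE_tm[OF RE], of sig]
    by (simp add: sig_tm sig_B1 sig_Rplus sig_Rminus Mm_def)
  have "sh 2 0 (tm s \<kappa> (tm s \<kappa> (tm s \<kappa> Mm ?B1) P0) ?D2) = sh 2 0 (tm s \<kappa> (tm s \<kappa> (tm s \<kappa> ?D2 P0) ?B1) Mm)"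
    using 1 by (simp only: tm_tconst_r[of s \<kappa> _ 2 0 "Pmat s"] tm_sh_l P0_def)
  then have 2: "tm s \<kappa> (tm s \<kappa> (tm s \<kappa> Mm ?B1) P0) ?D2 = tm s \<kappa> (tm s \<kappa> (tm s \<kappa> ?D2 P0) ?B1) Mm"
    by (rule sh_inj)
  have s1: "tm s \<kappa> P0 (tm s \<kappa> ?D2 Z) = tm s \<kappa> (tm s \<kappa> N1 P0) Z" for Z
    by (simp add: tm_assoc[symmetric] swap_P_D2 P0_def N1_def)
  have s2: "tm s \<kappa> ?D2 (tm s \<kappa> P0 Z) = tm s \<kappa> (tm s \<kappa> P0 N1) Z" for Z
    by (simp add: tm_assoc[symmetric] swap_D2_P[OF spm] P0_def N1_def)
  have "tm s \<kappa> (tm s \<kappa> (tm s \<kappa> Mm ?B1) P0) ?D2 = tm s \<kappa> Mm (tm s \<kappa> ?B1 (tm s \<kappa> N1 P0))"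
    by (simp add: tm_assoc swap_P_D2 P0_def N1_def)
  moreover have "tm s \<kappa> (tm s \<kappa> (tm s \<kappa> ?D2 P0) ?B1) Mm = tm s \<kappa> P0 (tm s \<kappa> N1 (tm s \<kappa> ?B1 Mm))"
    by (simp add: tm_assoc swap_D2_P[OF spm] P0_def N1_def)
  ultimately show ?thesis using 2 by (simp add: tm_assoc)
qed

lemma collapse2:
  fixes n m :: nat
  assumes "\<And>p q b d. p \<le> n \<Longrightarrow> q \<le> m \<Longrightarrow> b \<in> R \<Longrightarrow> d \<in> R \<Longrightarrow>
      G p q b d = (if q = qq \<and> d = dd then T p b else 0)" and "finite R"
  shows "(\<Sum>p\<le>n. \<Sum>q\<le>m. \<Sum>b\<in>R. \<Sum>d\<in>R. G p q b d) = (if qq \<le> m \<and> dd \<in> R then (\<Sum>p\<le>n. \<Sum>b\<in>R. T p b) else (0::'b::comm_monoid_add))"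
proof -
  have "(\<Sum>p\<le>n. \<Sum>q\<le>m. \<Sum>b\<in>R. \<Sum>d\<in>R. G p q b d) =
     (\<Sum>p\<le>n. \<Sum>q\<le>m. if q = qq then (\<Sum>b\<in>R. \<Sum>d\<in>R. if d = dd then T p b else 0) else 0)"
    by (intro sum.cong refl) (simp add: assms(1))
  also have "\<dots> = (if qq \<le> m \<and> dd \<in> R then (\<Sum>p\<le>n. \<Sum>b\<in>R. T p b) else 0)"
    using assms(2) by (simp add: sum.delta sum.delta' cong: if_cong)
  finally show ?thesis .
qed

lemma C_val:
  assumes "a \<in> {1..\<kappa>}" "f \<in> {1..\<kappa>}" "c \<in> {1..\<kappa>}" "h \<in> {1..\<kappa>}"
  shows "tm s \<kappa> (B1 s eps b) (negx (B1 s eps b)) n m a f c h =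
    (if m = 0 \<and> c = h then BBminus \<kappa> s eps b n a f else (0::'a::ring_1))"
proof (cases "m = 0 \<and> c = h")
  case True
  have "tm s \<kappa> (B1 s eps b) (negx (B1 s eps b)) n m a f c h =
     (if 0 \<le> m \<and> c \<in> {1..\<kappa>} then (\<Sum>p\<le>n. \<Sum>j\<in>{1..\<kappa>}.
        msign ((par s a + par s j) * (par s j + par s f))
        * (msign (par s a * par s j + par s j) * bser b eps a j p)
        * (msign (par s j * par s f + par s f) * msign (n - p) * bser b eps j f (n - p))) else 0)"
    unfolding tm_def tmul_sg
  proof (rule collapse2)
    fix p q j d assume "p \<le> n" "q \<le> m" "j \<in> {1..\<kappa>}" "d \<in> {1..\<kappa>}"
    have sgv: "sg s a j h h f h = (msign ((par s a + par s j) * (par s j + par s f)) :: 'a)"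
      unfolding sg_def
      by (intro msign_cong) (cases "even (par s a)"; cases "even (par s h)"; cases "even (par s f)"; cases "even (par s j)"; simp)
    show "sg s a j c d f h * trunc \<kappa> (B1 s eps b) p q a j c d * trunc \<kappa> (negx (B1 s eps b)) (n - p) (m - q) j f d h =
        (if q = 0 \<and> d = c then msign ((par s a + par s j) * (par s j + par s f))
        * (msign (par s a * par s j + par s j) * bser b eps a j p)
        * (msign (par s j * par s f + par s f) * msign (n - p) * bser b eps j f (n - p)) else 0)"
      using True assms \<open>j \<in> _\<close> \<open>d \<in> _\<close> \<open>q \<le> m\<close>
      by (auto simp: trunc_def B1_def negx_def sgv mult.assoc msign_comm[of "n - p"])
  qed simp
  then show ?thesis using True assms by (simp add: BBminus_def)
next
  case False
  then show ?thesis using assms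
    unfolding tm_def tmul_sg
    by (auto intro!: sum.neutral simp: trunc_def B1_def negx_def)
qed

lemma E2_raw:
  assumes spm: "\<forall>i\<in>{1..\<kappa>}. s i = 1 \<or> s i = -1"
    and RE: "reflection_eq \<kappa> s eps b"
  shows "tm s \<kappa> (tm s \<kappa> (tsub (tconst 2 0 (Pmat s)) (tadd (tconst 1 0 Id2) (tconst 1 0 Id2))) (tm s \<kappa> (B1 s eps b) (negx (B1 s eps b)))) (tconst 0 0 (Pmat s)) N 0 a f c h
     = tm s \<kappa> (tconst 0 0 (Pmat s)) (tm s \<kappa> (negx (tm s \<kappa> (B1 s eps b) (negx (B1 s eps b)))) (tsub (tconst 2 0 (Pmat s)) (tadd (tconst 1 0 Id2) (tconst 1 0 Id2)))) N 0 a f c h"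
proof -
  have Cn: "tm s \<kappa> (negx (B1 s eps b)) (B1 s eps b) = negx (tm s \<kappa> (B1 s eps b) (negx (B1 s eps b)))"
    by (simp add: negx_tm)
  show ?thesis using E2[OF spm RE] Cn by simp
qed

lemma Cv:
  "tm s \<kappa> (B1 s eps b) (negx (B1 s eps b)) n m x y z w = (if x \<in> {1..\<kappa>} \<and> y \<in> {1..\<kappa>} \<and> z \<in> {1..\<kappa>} \<and> w \<in> {1..\<kappa>} then (if m = 0 \<and> z = w then BBminus \<kappa> s eps b n x y else (0::'a::ring_1)) else 0)"
proof (cases "x \<in> {1..\<kappa>} \<and> y \<in> {1..\<kappa>} \<and> z \<in> {1..\<kappa>} \<and> w \<in> {1..\<kappa>}")
  case True
  then show ?thesis using C_val[of x \<kappa> y z w s eps b n m] by simp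
next
  case False
  let ?C = "tm s \<kappa> (B1 s eps b) (negx (B1 s eps b)) :: 'a tser"
  have "?C n m x y z w = trunc \<kappa> ?C n m x y z w" by (simp only: trunc_tm)
  also have "\<dots> = 0" unfolding trunc_def using False by (auto simp del: trunc_tm)
  finally have "?C n m x y z w = 0" .
  then show ?thesis by (simp only: if_not_P[OF False])
qed

lemma LHS_val:
  assumes "a \<in> {1..\<kappa>}" "f \<in> {1..\<kappa>}" "c \<in> {1..\<kappa>}" "h \<in> {1..\<kappa>}"
  shows "tm s \<kappa> (tm s \<kappa> (tsub (tconst 2 0 (Pmat s)) (tadd (tconst 1 0 Id2) (tconst 1 0 Id2))) X) (tconst 0 0 (Pmat s)) N 0 a f c h =
    sg s a h c f f h * ((if 2 \<le> N then sg s a c c a h f * of_int (s c) * trunc \<kappa> X (N - 2) 0 c h a f else 0)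
      - ((if 1 \<le> N then trunc \<kappa> X (N - 1) 0 a h c f else 0) + (if 1 \<le> N then trunc \<kappa> X (N - 1) 0 a h c f else (0::'a::ring_1)))) * of_int (s f)"
  using assms by (simp add: tm_P_r tm_P_l tm_tsub_l tm_tadd_l tm_Id_l trunc_sh trunc_tsub trunc_tadd tsub_def tadd_def sh_def ring_distribs mult.assoc)

lemma RHS_val:
  assumes "a \<in> {1..\<kappa>}" "f \<in> {1..\<kappa>}" "c \<in> {1..\<kappa>}" "h \<in> {1..\<kappa>}"
  shows "tm s \<kappa> (tconst 0 0 (Pmat s)) (tm s \<kappa> Y (tsub (tconst 2 0 (Pmat s)) (tadd (tconst 1 0 Id2) (tconst 1 0 Id2)))) N 0 a f c h =
    sg s a c c a f h * of_int (s c) * ((if 2 \<le> N then sg s c h a f f h * trunc \<kappa> Y (N - 2) 0 c h a f * of_int (s f) else 0)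
      - ((if 1 \<le> N then trunc \<kappa> Y (N - 1) 0 c f a h else 0) + (if 1 \<le> N then trunc \<kappa> Y (N - 1) 0 c f a h else (0::'a::ring_1))))"
  using assms by (simp add: tm_P_r tm_P_l tm_tsub_r tm_tadd_r tm_Id_r trunc_sh trunc_tsub trunc_tadd tsub_def tadd_def sh_def ring_distribs mult.assoc)

lemma trunc_negxC: "trunc \<kappa> (negx (tm s \<kappa> X Y)) = negx (tm s \<kappa> X Y)"
  by (simp add: negx_trunc[symmetric])

lemma half_cancel:
  fixes phi :: "complex \<Rightarrow> 'a::ring_1"
  assumes phi: "is_C_algebra phi" and "y + y = (0::'a::ring_1)"
  shows "y = 0"
proof -
  have p1: "phi 1 = 1" using phi by (simp add: is_C_algebra_def)
  have padd: "\<And>x y. phi (x + y) = phi x + phi y" using phi by (simp add: is_C_algebra_def)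
  have "phi (1/2) + phi (1/2) = 1" using p1 padd[of "1/2" "1/2"] by simp
  then have "y = (phi (1/2) + phi (1/2)) * y" by simp
  also have "\<dots> = phi (1/2) * (y + y)" by (simp add: distrib_left distrib_right)
  also have "\<dots> = 0" using assms(2) by simp
  finally show ?thesis .
qed

lemma neg_cancel:
  fixes phi :: "complex \<Rightarrow> 'a::ring_1"
  assumes phi: "is_C_algebra phi" and "- y = (y::'a::ring_1)"
  shows "y = 0"
  using half_cancel[OF phi, of y] assms(2) by (metis add.right_inverse)

lemma sg_sq: "sg s a b c d f h * sg s a b c d f h = (1::'a::ring_1)"
  by (simp add: sg_def msign_sq)

lemma s_sq: "s i = 1 \<or> s i = -1 \<Longrightarrow> (of_int (s i) * of_int (s i) :: 'a::ring_1) = 1"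
  by (auto simp flip: of_int_mult)

lemma unit_cancel:
  assumes "sg s a b c d f h * x * of_int (s i) = (0::'a::ring_1)" and "s i = 1 \<or> s i = -1"
  shows "x = 0"
proof -
  have "x = (sg s a b c d f h * sg s a b c d f h) * x * (of_int (s i) * of_int (s i))"
    by (simp only: s_sq[of s i, OF assms(2)] sg_sq mult_1_left mult_1_right)
  also have "\<dots> = sg s a b c d f h * (sg s a b c d f h * x * of_int (s i)) * of_int (s i)"
    by (simp add: mult.assoc)
  also have "\<dots> = 0" using assms(1) by simp
  finally show ?thesis .
qed

lemma offdiag:
  assumes spm: "\<forall>i\<in>{1..\<kappa>}. s i = 1 \<or> s i = -1"
    and RE: "reflection_eq \<kappa> s eps b" and phi: "is_C_algebra (phi :: complex \<Rightarrow> 'a::ring_1)"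
    and inR: "a \<in> {1..\<kappa>}" "h \<in> {1..\<kappa>}" and ne: "a \<noteq> h"
  shows "BBminus \<kappa> s eps b n a h = (0::'a)"
proof -
  let ?x = "BBminus \<kappa> s eps b n a h :: 'a"
  have t: "1 \<le> Suc n" "Suc n - 1 = n" by auto
  note E = E2_raw[OF spm RE, of "Suc n" a h h h, unfolded LHS_val[OF inR(1) inR(2) inR(2) inR(2)] RHS_val[OF inR(1) inR(2) inR(2) inR(2)], simplified trunc_negxC trunc_tm, simplified inR ne C_val negx_def, simplified if_False if_True t simp_thms mult_zero_right mult_zero_left if_cancel]
  have Z: "sg s a h h a h h * of_int (s h) * (0 - (0 + 0)) = (0::'a)" by simp
  have "sg s a h h h h h * (0 - (?x + ?x)) * of_int (s h) = 0"
    using E Z by (rule trans)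
  then have "0 - (?x + ?x) = 0" by (rule unit_cancel[of s a h h h h h _ h]) (use spm inR in auto)
  then have "?x + ?x = 0" by (simp only: diff_0 neg_equal_0_iff_equal)
  then show ?thesis by (rule half_cancel[OF phi])
qed

lemma grp1: "- A - A = - B - (B::'a::ring_1) \<Longrightarrow> A + A = B + B"
  by (metis diff_conv_add_uminus minus_add_distrib neg_equal_iff_equal)

lemma diag:
  assumes spm: "\<forall>i\<in>{1..\<kappa>}. s i = 1 \<or> s i = -1"
    and RE: "reflection_eq \<kappa> s eps b" and phi: "is_C_algebra (phi :: complex \<Rightarrow> 'a::ring_1)"
    and inR: "a \<in> {1..\<kappa>}" "h \<in> {1..\<kappa>}" and ne: "a \<noteq> h"
  shows "BBminus \<kappa> s eps b n a a = msign n * (BBminus \<kappa> s eps b n h h :: 'a)"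
proof -
  let ?x = "BBminus \<kappa> s eps b n a a :: 'a" and ?y = "msign n * BBminus \<kappa> s eps b n h h :: 'a"
    and ?s = "of_int (s h) :: 'a"
  have g1: "sg s a a h h h a = (1::'a)" unfolding sg_def
    by (rule msign_even) (cases "even (par s a)"; cases "even (par s h)"; simp)
  have g2: "sg s a h h a h a = (1::'a)" unfolding sg_def
    by (rule msign_even) (cases "even (par s a)"; cases "even (par s h)"; simp)
  have t: "1 \<le> Suc n" "Suc n - 1 = n" by auto
  note E = E2_raw[OF spm RE, of "Suc n" a h h a, unfolded LHS_val[OF inR(1) inR(2) inR(2) inR(1)] RHS_val[OF inR(1) inR(2) inR(2) inR(1)], simplified trunc_negxC trunc_tm, simplified inR ne C_val negx_def, simplified if_False if_True t simp_thms mult_zero_right mult_zero_left if_cancel]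
  have "sg s a a h h h a * (0 - (?x + ?x)) * ?s = sg s a h h a h a * ?s * (0 - (?y + ?y))"
    by (rule E)
  then have "(0 - (?x + ?x)) * ?s = ?s * (0 - (?y + ?y))" by (simp only: g1 g2 mult_1_left)
  also have "\<dots> = (0 - (?y + ?y)) * ?s" by (rule mult_of_int_commute)
  finally have "((0 - (?x + ?x)) - (0 - (?y + ?y))) * ?s = 0" by (simp add: left_diff_distrib)
  then have "((0 - (?x + ?x)) - (0 - (?y + ?y))) * (?s * ?s) = 0" by (simp add: mult.assoc[symmetric])
  moreover have "?s * ?s = 1" using s_sq[of s h] spm inR by auto
  ultimately have "(0 - (?x + ?x)) - (0 - (?y + ?y)) = 0" by (simp only: mult_1_right)
  then have "(?x - ?y) + (?x - ?y) = 0" by (simp add: algebra_simps)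
  then have "?x - ?y = 0" by (rule half_cancel[OF phi])
  then show ?thesis by simp
qed

lemma odd_zero:
  fixes k :: nat
  assumes spm: "\<forall>i\<in>{1..\<kappa>}. s i = 1 \<or> s i = -1"
    and RE: "reflection_eq \<kappa> s eps b" and phi: "is_C_algebra (phi :: complex \<Rightarrow> 'a::ring_1)"
    and inR: "a \<in> {1..\<kappa>}" and k: "odd k"
  shows "BBminus \<kappa> s eps b k a a = (0 :: 'a)"
proof -
  let ?x = "BBminus \<kappa> s eps b k a a :: 'a" and ?y = "BBminus \<kappa> s eps b (Suc k - 2) a a :: 'a"
    and ?s = "of_int (s a) :: 'a" and ?g = "sg s a a a a a a :: 'a"
  have g: "?g = 1" unfolding sg_def
    by (rule msign_even) (cases "even (par s a)"; simp)
  have k1: "Suc 0 \<le> k" using k by (cases k) auto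
  have m1: "msign (Suc k - 2) = (1::'a)" using k k1 by (intro msign_even) simp
  have m2: "msign k = (-1::'a)" using k by (intro msign_odd)
  have t: "1 \<le> Suc k" "Suc k - 1 = k" "2 \<le> Suc k" using k by (auto elim: oddE)
  note E = E2_raw[OF spm RE, of "Suc k" a a a a, unfolded LHS_val[OF inR inR inR inR] RHS_val[OF inR inR inR inR], simplified trunc_negxC trunc_tm, simplified inR C_val negx_def, simplified if_False if_True t simp_thms mult_zero_right mult_zero_left if_cancel]
  have "?g * (?g * ?s * ?y - (?x + ?x)) * ?s = ?g * ?s * (?g * (msign (Suc k - 2) * ?y) * ?s - (msign k * ?x + msign k * ?x))"
    by (rule E)
  then have "(?s * ?y - (?x + ?x)) * ?s = ?s * (?y * ?s - (- ?x + - ?x))"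
    by (simp only: g m1 m2 mult_1_left mult_minus_left)
  then have "?s * ?y * ?s - (?x + ?x) * ?s = ?s * ?y * ?s + ?s * (?x + ?x)"
    by (simp add: algebra_simps)
  then have "- ((?x + ?x) * ?s) = ?s * (?x + ?x)" by simp
  also have "\<dots> = (?x + ?x) * ?s" by (rule mult_of_int_commute)
  finally have "(?x + ?x) * ?s = 0" by (rule neg_cancel[OF phi])
  then have "(?x + ?x) * (?s * ?s) = 0" by (simp add: mult.assoc[symmetric])
  moreover have "?s * ?s = 1" using s_sq[of s a] spm inR by auto
  ultimately have "?x + ?x = 0" by (simp only: mult_1_right)
  then show ?thesis by (rule half_cancel[OF phi])
qed

definition Qm :: "(nat \<Rightarrow> int) \<Rightarrow> 'a::ring_1 tser" where
  "Qm s = tadd (tsub (tconst 0 1 Id2) (tconst 1 0 Id2)) (tconst 1 1 (Pmat s))"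

definition Qp :: "(nat \<Rightarrow> int) \<Rightarrow> 'a::ring_1 tser" where
  "Qp s = tadd (tadd (tconst 0 1 Id2) (tconst 1 0 Id2)) (tconst 1 1 (Pmat s))"

definition g1 :: "'a::ring_1 tser \<Rightarrow> 'a tser" where
  "g1 X = tsub (tsub (tadd (sh 0 2 X) (sh 2 0 X)) (tadd (sh 1 1 X) (sh 1 1 X))) (sh 2 2 X)"

definition g2 :: "'a::ring_1 tser \<Rightarrow> 'a tser" where
  "g2 X = tsub (tadd (tadd (sh 0 2 X) (sh 2 0 X)) (tadd (sh 1 1 X) (sh 1 1 X))) (sh 2 2 X)"

lemma negx_Rplus: "negx (Rplus s) = Qm s"
  unfolding Rplus_def Qm_def negx_tsub negx_tadd negx_tconst
  by (intro ext) (simp add: tsub_def tadd_def tconst_def msign_def)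

lemma negx_Rminus: "negx (Rminus s) = Qp s"
  unfolding Rminus_def Qp_def negx_tsub negx_tadd negx_tconst
  by (intro ext) (simp add: tsub_def tadd_def tconst_def msign_def)

lemma tm_Rm_l: "tm s \<kappa> (Rminus s) Y = tsub (tsub (sh 0 1 (trunc \<kappa> Y)) (sh 1 0 (trunc \<kappa> Y))) (sh 1 1 (tm s \<kappa> (tconst 0 0 (Pmat s)) Y))"
  unfolding Rminus_def by (simp only: tm_tsub_l tm_Id_l tm_tconst_l[of s \<kappa> 1 1 "Pmat s"])
lemma tm_Rp_l: "tm s \<kappa> (Rplus s) Y = tsub (tadd (sh 0 1 (trunc \<kappa> Y)) (sh 1 0 (trunc \<kappa> Y))) (sh 1 1 (tm s \<kappa> (tconst 0 0 (Pmat s)) Y))"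
  unfolding Rplus_def by (simp only: tm_tsub_l tm_tadd_l tm_Id_l tm_tconst_l[of s \<kappa> 1 1 "Pmat s"])
lemma tm_Qm_l: "tm s \<kappa> (Qm s) Y = tadd (tsub (sh 0 1 (trunc \<kappa> Y)) (sh 1 0 (trunc \<kappa> Y))) (sh 1 1 (tm s \<kappa> (tconst 0 0 (Pmat s)) Y))"
  unfolding Qm_def by (simp only: tm_tsub_l tm_tadd_l tm_Id_l tm_tconst_l[of s \<kappa> 1 1 "Pmat s"])
lemma tm_Qp_l: "tm s \<kappa> (Qp s) Y = tadd (tadd (sh 0 1 (trunc \<kappa> Y)) (sh 1 0 (trunc \<kappa> Y))) (sh 1 1 (tm s \<kappa> (tconst 0 0 (Pmat s)) Y))"
  unfolding Qp_def by (simp only: tm_tsub_l tm_tadd_l tm_Id_l tm_tconst_l[of s \<kappa> 1 1 "Pmat s"])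
lemma tm_Rm_r: "tm s \<kappa> Y (Rminus s) = tsub (tsub (sh 0 1 (trunc \<kappa> Y)) (sh 1 0 (trunc \<kappa> Y))) (sh 1 1 (tm s \<kappa> Y (tconst 0 0 (Pmat s))))"
  unfolding Rminus_def by (simp only: tm_tsub_r tm_Id_r tm_tconst_r[of s \<kappa> _ 1 1 "Pmat s"])
lemma tm_Rp_r: "tm s \<kappa> Y (Rplus s) = tsub (tadd (sh 0 1 (trunc \<kappa> Y)) (sh 1 0 (trunc \<kappa> Y))) (sh 1 1 (tm s \<kappa> Y (tconst 0 0 (Pmat s))))"
  unfolding Rplus_def by (simp only: tm_tsub_r tm_tadd_r tm_Id_r tm_tconst_r[of s \<kappa> _ 1 1 "Pmat s"])

lemma tm_PPY:
  assumes spm: "\<forall>i\<in>{1..\<kappa>}. s i = 1 \<or> s i = -1"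
  shows "tm s \<kappa> (tconst 0 0 (Pmat s)) (tm s \<kappa> (tconst 0 0 (Pmat s)) Y) = (trunc \<kappa> Y :: 'a::ring_1 tser)"
  by (simp add: tm_assoc[symmetric] tm_PP[OF spm] tm_I_l)

lemma RmQm:
  assumes spm: "\<forall>i\<in>{1..\<kappa>}. s i = 1 \<or> s i = -1"
  shows "tm s \<kappa> (Rminus s) (tm s \<kappa> (Qm s) Z) = (g1 (trunc \<kappa> Z) :: 'a::ring_1 tser)"
  by (simp add: tm_Rm_l tm_Qm_l trunc_tsub trunc_tadd trunc_sh tm_tsub_r tm_tadd_r tm_sh_r tm_PPY[OF spm]
      sh_sh sh_tsub sh_tadd g1_def, intro ext, simp add: tsub_def tadd_def algebra_simps numeral_2_eq_2)

lemma RpQp: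
  assumes spm: "\<forall>i\<in>{1..\<kappa>}. s i = 1 \<or> s i = -1"
  shows "tm s \<kappa> (Rplus s) (tm s \<kappa> (Qp s) Z) = (g2 (trunc \<kappa> Z) :: 'a::ring_1 tser)"
  by (simp add: tm_Rp_l tm_Qp_l trunc_tsub trunc_tadd trunc_sh tm_tsub_r tm_tadd_r tm_sh_r tm_PPY[OF spm]
      sh_sh sh_tsub sh_tadd g2_def, intro ext, simp add: tsub_def tadd_def algebra_simps numeral_2_eq_2)

lemma tm_g1_r: "tm s \<kappa> X (g1 Y) = g1 (tm s \<kappa> X Y)"
  by (simp add: g1_def tm_tsub_r tm_tadd_r tm_sh_r)

lemma tm_g2_r: "tm s \<kappa> X (g2 Y) = g2 (tm s \<kappa> X Y)"
  by (simp add: g2_def tm_tsub_r tm_tadd_r tm_sh_r)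

lemma g1_g2_comm: "g1 (g2 X) = g2 (g1 X)"
  by (simp add: g1_def g2_def sh_tsub sh_tadd sh_sh, intro ext, simp add: tsub_def tadd_def algebra_simps eval_nat_numeral)

lemma g1_cancel:
  assumes "g1 X = g1 Y"
  shows "X = Y"
proof -
  have "\<forall>m a b c d. X n m a b c d = Y n m a b c d" for n
  proof (induction n rule: less_induct)
    case (less n)
    show ?case
    proof (intro allI)
      fix m a b c d
      have e: "g1 X n (m + 2) a b c d = g1 Y n (m + 2) a b c d" using assms by simp
      have ih: "X k l a b c d = Y k l a b c d" if "k < n" for k l using less that by blast
      show "X n m a b c d = Y n m a b c d"
      proof (cases "n \<ge> 2")
        case True
        then have "X (n - 1) (m + 1) a b c d = Y (n - 1) (m + 1) a b c d" "X (n - 2) (m + 2) a b c d = Y (n - 2) (m + 2) a b c d"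
           "X (n - 2) m a b c d = Y (n - 2) m a b c d" by (auto intro: ih)
        then show ?thesis using e True by (simp add: g1_def tsub_def tadd_def sh_def)
      next
        case False
        show ?thesis
        proof (cases "n = 1")
          case True
          then have "X (n - 1) (m + 1) a b c d = Y (n - 1) (m + 1) a b c d" by (auto intro: ih)
          then show ?thesis using e True by (simp add: g1_def tsub_def tadd_def sh_def)
        next
          case False
          then show ?thesis using e \<open>\<not> n \<ge> 2\<close> by (simp add: g1_def tsub_def tadd_def sh_def)
        qed
      qed
    qed
  qed
  then show ?thesis by (intro ext) blast
qed

lemma g2_cancel:
  assumes "g2 X = g2 Y"
  shows "X = Y"
proof -
  have "\<forall>m a b c d. X n m a b c d = Y n m a b c d" for n
  proof (induction n rule: less_induct)
    case (less n)
    show ?case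
    proof (intro allI)
      fix m a b c d
      have e: "g2 X n (m + 2) a b c d = g2 Y n (m + 2) a b c d" using assms by simp
      have ih: "X k l a b c d = Y k l a b c d" if "k < n" for k l using less that by blast
      show "X n m a b c d = Y n m a b c d"
      proof (cases "n \<ge> 2")
        case True
        then have "X (n - 1) (m + 1) a b c d = Y (n - 1) (m + 1) a b c d" "X (n - 2) (m + 2) a b c d = Y (n - 2) (m + 2) a b c d"
           "X (n - 2) m a b c d = Y (n - 2) m a b c d" by (auto intro: ih)
        then show ?thesis using e True by (simp add: g2_def tsub_def tadd_def sh_def)
      next
        case False
        show ?thesis
        proof (cases "n = 1")
          case True
          then have "X (n - 1) (m + 1) a b c d = Y (n - 1) (m + 1) a b c d" by (auto intro: ih)
          then show ?thesis using e True by (simp add: g2_def tsub_def tadd_def sh_def)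
        next
          case False
          then show ?thesis using e \<open>\<not> n \<ge> 2\<close> by (simp add: g2_def tsub_def tadd_def sh_def)
        qed
      qed
    qed
  qed
  then show ?thesis by (intro ext) blast
qed

lemma diag_all:
  assumes spm: "\<forall>i\<in>{1..\<kappa>}. s i = 1 \<or> s i = -1"
    and RE: "reflection_eq \<kappa> s eps b" and phi: "is_C_algebra (phi :: complex \<Rightarrow> 'a::ring_1)"
    and inR: "i \<in> {1..\<kappa>}"
  shows "BBminus \<kappa> s eps b n i i = (BBminus \<kappa> s eps b n 1 1 :: 'a)"
proof (cases "i = 1")
  case True then show ?thesis by simp
next
  case False
  have one: "1 \<in> {1..\<kappa>}" using inR by auto
  have d: "BBminus \<kappa> s eps b n i i = msign n * (BBminus \<kappa> s eps b n 1 1 :: 'a)"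
    using diag[OF spm RE phi inR one False] .
  show ?thesis
  proof (cases "even n")
    case True then show ?thesis using d by (simp add: msign_even)
  next
    case False then show ?thesis using d odd_zero[OF spm RE phi one False] odd_zero[OF spm RE phi inR False] by simp
  qed
qed

lemma C_scalar:
  assumes spm: "\<forall>i\<in>{1..\<kappa>}. s i = 1 \<or> s i = -1"
    and RE: "reflection_eq \<kappa> s eps b" and phi: "is_C_algebra (phi :: complex \<Rightarrow> 'a::ring_1)"
  shows "tm s \<kappa> (B1 s eps b) (negx (B1 s eps b)) n m x y z w =
    (if x \<in> {1..\<kappa>} \<and> y \<in> {1..\<kappa>} \<and> z \<in> {1..\<kappa>} \<and> w \<in> {1..\<kappa>} \<and> m = 0 \<and> z = w \<and> x = y then BBminus \<kappa> s eps b n 1 1 else (0::'a))"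
  using Cv[of s \<kappa> eps b n m x y z w] offdiag[OF spm RE phi, of x y n] diag_all[OF spm RE phi, of x n]
  by auto

lemma C_P_comm:
  assumes spm: "\<forall>i\<in>{1..\<kappa>}. s i = 1 \<or> s i = -1"
    and RE: "reflection_eq \<kappa> s eps b" and phi: "is_C_algebra (phi :: complex \<Rightarrow> 'a::ring_1)"
  shows "tm s \<kappa> (tconst 0 0 (Pmat s)) (tm s \<kappa> (B1 s eps b) (negx (B1 s eps b)))
       = (tm s \<kappa> (tm s \<kappa> (B1 s eps b) (negx (B1 s eps b))) (tconst 0 0 (Pmat s)) :: 'a tser)"
proof (intro ext)
  fix n m a f c h
  let ?C = "tm s \<kappa> (B1 s eps b) (negx (B1 s eps b)) :: 'a tser"
  have g1: "sg s x x y y y x = (1::'a)" for x y unfolding sg_def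
    by (rule msign_even) (cases "even (par s x)"; cases "even (par s y)"; simp)
  have g2: "sg s x y y x y x = (1::'a)" for x y unfolding sg_def
    by (rule msign_even) (cases "even (par s x)"; cases "even (par s y)"; simp)
  show "tm s \<kappa> (tconst 0 0 (Pmat s)) ?C n m a f c h = tm s \<kappa> ?C (tconst 0 0 (Pmat s)) n m a f c h"
    using mult_of_int_commute[of "s _" "BBminus \<kappa> s eps b n 1 1 :: 'a"]
    by (simp add: tm_P_l tm_P_r C_scalar[OF spm RE phi] g1 g2)
qed

lemma B2_C_comm:
  assumes spm: "\<forall>i\<in>{1..\<kappa>}. s i = 1 \<or> s i = -1"
    and RE: "reflection_eq \<kappa> s eps b" and phi: "is_C_algebra (phi :: complex \<Rightarrow> 'a::ring_1)"
  shows "tm s \<kappa> (B2 s eps b) (tm s \<kappa> (B1 s eps b) (negx (B1 s eps b)))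
       = (tm s \<kappa> (tm s \<kappa> (B1 s eps b) (negx (B1 s eps b))) (B2 s eps b) :: 'a tser)"
proof -
  let ?B1 = "B1 s eps b :: 'a tser" and ?B2 = "B2 s eps b :: 'a tser" and ?N1 = "negx (B1 s eps b) :: 'a tser"
  let ?C = "tm s \<kappa> ?B1 ?N1" and ?Rm = "Rminus s :: 'a tser" and ?Rp = "Rplus s :: 'a tser"
    and ?Qm = "Qm s :: 'a tser" and ?Qp = "Qp s :: 'a tser" and ?I = "tconst 0 0 Id2 :: 'a tser"
  have RE1: "tm s \<kappa> ?Rm (tm s \<kappa> ?B1 (tm s \<kappa> ?Rp (tm s \<kappa> ?B2 Z))) = tm s \<kappa> ?B2 (tm s \<kappa> ?Rp (tm s \<kappa> ?B1 (tm s \<kappa> ?Rm Z)))" for Z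
    using arg_cong[OF RE_tm[OF RE], of "\<lambda>X. tm s \<kappa> X Z"] by (simp only: tm_assoc)
  have RE2: "tm s \<kappa> ?Qp (tm s \<kappa> ?N1 (tm s \<kappa> ?Qm ?B2)) = tm s \<kappa> ?B2 (tm s \<kappa> ?Qm (tm s \<kappa> ?N1 ?Qp))"
    using arg_cong[OF RE_tm[OF RE], of negx]
    by (simp only: negx_tm negx_Rminus negx_Rplus negx_B2 tm_assoc)
  have CP: "tm s \<kappa> (tconst 0 0 (Pmat s)) ?C = tm s \<kappa> ?C (tconst 0 0 (Pmat s))"
    by (rule C_P_comm[OF spm RE phi])
  have CRp: "tm s \<kappa> ?Rp (tm s \<kappa> ?C Z) = tm s \<kappa> ?C (tm s \<kappa> ?Rp Z)" for Z
  proof -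
    have "tm s \<kappa> ?Rp ?C = tm s \<kappa> ?C ?Rp" by (simp add: tm_Rp_l tm_Rp_r CP)
    then show ?thesis by (metis tm_assoc)
  qed
  have CRm: "tm s \<kappa> ?Rm (tm s \<kappa> ?C Z) = tm s \<kappa> ?C (tm s \<kappa> ?Rm Z)" for Z
  proof -
    have "tm s \<kappa> ?Rm ?C = tm s \<kappa> ?C ?Rm" by (simp add: tm_Rm_l tm_Rm_r CP)
    then show ?thesis by (metis tm_assoc)
  qed
  have RpQp': "tm s \<kappa> ?Rp ?Qp = g2 (trunc \<kappa> ?I)"
    using RpQp[OF spm, of ?I] by (simp add: tm_I_r)
  let ?W = "tm s \<kappa> ?Rm (tm s \<kappa> ?B1 (tm s \<kappa> ?Rp (tm s \<kappa> ?B2 (tm s \<kappa> ?Qm (tm s \<kappa> ?N1 ?Qp)))))"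
  have "?W = tm s \<kappa> ?B2 (tm s \<kappa> ?Rp (tm s \<kappa> ?B1 (tm s \<kappa> ?Rm (tm s \<kappa> ?Qm (tm s \<kappa> ?N1 ?Qp)))))"
    by (rule RE1)
  also have "\<dots> = g1 (tm s \<kappa> ?B2 (tm s \<kappa> ?Rp (tm s \<kappa> ?C ?Qp)))"
    by (simp add: RmQm[OF spm] tm_g1_r tm_assoc)
  also have "\<dots> = g1 (tm s \<kappa> ?B2 (tm s \<kappa> ?C (g2 (trunc \<kappa> ?I))))"
    by (simp only: CRp RpQp')
  also have "\<dots> = g1 (g2 (tm s \<kappa> ?B2 ?C))"
    by (simp add: tm_g2_r tm_I_r)
  finally have W1: "?W = g1 (g2 (tm s \<kappa> ?B2 ?C))" .
  have "?W = tm s \<kappa> ?Rm (tm s \<kappa> ?B1 (tm s \<kappa> ?Rp (tm s \<kappa> ?Qp (tm s \<kappa> ?N1 (tm s \<kappa> ?Qm ?B2)))))"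
    by (simp only: RE2)
  also have "\<dots> = g2 (tm s \<kappa> ?Rm (tm s \<kappa> ?C (tm s \<kappa> ?Qm ?B2)))"
    by (simp add: RpQp[OF spm] tm_g2_r tm_assoc)
  also have "\<dots> = g2 (tm s \<kappa> ?C (g1 (trunc \<kappa> ?B2)))"
    by (simp only: CRm RmQm[OF spm])
  also have "\<dots> = g2 (g1 (tm s \<kappa> ?C ?B2))"
    by (simp add: tm_g1_r)
  finally have W2: "?W = g1 (g2 (tm s \<kappa> ?C ?B2))" by (simp add: g1_g2_comm)
  from W1[symmetric] W2 have "g1 (g2 (tm s \<kappa> ?B2 ?C)) = g1 (g2 (tm s \<kappa> ?C ?B2))" by (rule trans)
  then have "g2 (tm s \<kappa> ?B2 ?C) = g2 (tm s \<kappa> ?C ?B2)" by (rule g1_cancel)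
  then show ?thesis by (rule g2_cancel)
qed


lemma B2C_point:
  assumes spm: "\<forall>i\<in>{1..\<kappa>}. s i = 1 \<or> s i = -1"
    and RE: "reflection_eq \<kappa> s eps b" and phi: "is_C_algebra (phi :: complex \<Rightarrow> 'a::ring_1)"
    and inR: "a \<in> {1..\<kappa>}" "c \<in> {1..\<kappa>}" "h \<in> {1..\<kappa>}"
  shows "tm s \<kappa> (B2 s eps b) (tm s \<kappa> (B1 s eps b) (negx (B1 s eps b))) n m a a c h
     = sg s a a c h a h * B2 s eps b 0 m a a c h * (BBminus \<kappa> s eps b n 1 1 :: 'a)"
  unfolding tm_def[of s \<kappa> "B2 s eps b" "tm s \<kappa> (B1 s eps b) (negx (B1 s eps b))"] trunc_tm tmul_sg
  apply (subst collapse4[where pp=0 and qq=m and bb=a and dd=h and T="sg s a a c h a h * B2 s eps b 0 m a a c h * (BBminus \<kappa> s eps b n 1 1 :: 'a)"])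
  using inR
    apply (auto simp: trunc_def[of \<kappa> "B2 s eps b"] C_scalar[OF spm RE phi] B2_def)
  done

lemma CB2_point:
  assumes spm: "\<forall>i\<in>{1..\<kappa>}. s i = 1 \<or> s i = -1"
    and RE: "reflection_eq \<kappa> s eps b" and phi: "is_C_algebra (phi :: complex \<Rightarrow> 'a::ring_1)"
    and inR: "a \<in> {1..\<kappa>}" "c \<in> {1..\<kappa>}" "h \<in> {1..\<kappa>}"
  shows "tm s \<kappa> (tm s \<kappa> (B1 s eps b) (negx (B1 s eps b))) (B2 s eps b) n m a a c h
     = sg s a a c c a h * (BBminus \<kappa> s eps b n 1 1 :: 'a) * B2 s eps b 0 m a a c h"
  unfolding tm_def[of s \<kappa> "tm s \<kappa> (B1 s eps b) (negx (B1 s eps b))" "B2 s eps b"] trunc_tm tmul_sg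
  apply (subst collapse4[where pp=n and qq=0 and bb=a and dd=c and T="sg s a a c c a h * (BBminus \<kappa> s eps b n 1 1 :: 'a) * B2 s eps b 0 m a a c h"])
  using inR
    apply (auto simp: trunc_def[of \<kappa> "B2 s eps b"] C_scalar[OF spm RE phi] B2_def)
  done

theorem proposition3p2:
  fixes m n \<kappa> :: nat and s eps :: "nat \<Rightarrow> int"
    and phi :: "complex \<Rightarrow> 'a::ring_1" and b :: "nat \<Rightarrow> nat \<Rightarrow> nat \<Rightarrow> 'a"
  assumes "\<kappa> = m + n"
    and "\<forall>i\<in>{1..\<kappa>}. s i = 1 \<or> s i = -1"
    and "card {i\<in>{1..\<kappa>}. s i = 1} = m"
    and "\<forall>i\<in>{1..\<kappa>}. eps i = 1 \<or> eps i = -1"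
    and "is_C_algebra phi"
    and "reflection_eq \<kappa> s eps b"
  shows "\<exists>f :: nat \<Rightarrow> 'a.
           (\<forall>r. odd r \<longrightarrow> f r = 0)
         \<and> (\<forall>r i j k. i \<in> {1..\<kappa>} \<longrightarrow> j \<in> {1..\<kappa>} \<longrightarrow> k \<ge> 1 \<longrightarrow> f r * b i j k = b i j k * f r)
         \<and> (\<forall>r i l. i \<in> {1..\<kappa>} \<longrightarrow> l \<in> {1..\<kappa>} \<longrightarrow>
              BBminus \<kappa> s eps b r i l = (if i = l then f r else 0))"
proof -
  note spm = assms(2) and phi = assms(5) and RE = assms(6)
  define f where "f r = BBminus \<kappa> s eps b r 1 1" for r
  show ?thesis
  proof (intro exI[of _ f] conjI allI impI)
    fix r :: nat assume r: "odd r"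
    show "f r = 0"
    proof (cases "\<kappa> = 0")
      case True then show ?thesis by (simp add: f_def BBminus_def)
    next
      case False
      then have "1 \<in> {1..\<kappa>}" by auto
      then show ?thesis unfolding f_def by (rule odd_zero[OF spm RE phi _ r])
    qed
  next
    fix r i l assume i: "i \<in> {1..\<kappa>}" and l: "l \<in> {1..\<kappa>}"
    show "BBminus \<kappa> s eps b r i l = (if i = l then f r else 0)"
      using offdiag[OF spm RE phi i l, of r] diag_all[OF spm RE phi i, of r] unfolding f_def by auto
  next
    fix r i j k :: nat assume i: "i \<in> {1..\<kappa>}" and j: "j \<in> {1..\<kappa>}" and k: "1 \<le> k"
    let ?F = "BBminus \<kappa> s eps b r 1 1 :: 'a"
    let ?ms = "msign (par s i * par s j + par s j) :: 'a"
    have e1: "sg s i i i j i j = (1::'a)" unfolding sg_def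
      by (rule msign_even) (cases "even (par s i)"; cases "even (par s j)"; simp)
    have e2: "sg s i i i i i j = (1::'a)" unfolding sg_def
      by (rule msign_even) (cases "even (par s i)"; cases "even (par s j)"; simp)
    have B2v: "B2 s eps b 0 k i i i j = ?ms * b i j k" using k by (simp add: B2_def bser_def)
    have "tm s \<kappa> (B2 s eps b) (tm s \<kappa> (B1 s eps b) (negx (B1 s eps b))) r k i i i j
        = tm s \<kappa> (tm s \<kappa> (B1 s eps b) (negx (B1 s eps b))) (B2 s eps b) r k i i i j"
      by (simp only: B2_C_comm[OF spm RE phi])
    then have "?ms * b i j k * ?F = ?F * (?ms * b i j k)"
      by (simp only: B2C_point[OF spm RE phi i i j] CB2_point[OF spm RE phi i i j] e1 e2 B2v mult_1_left)
    then have "?ms * (b i j k * ?F) = ?ms * (?F * b i j k)"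
      by (simp only: mult.assoc[symmetric] msign_comm[of _ ?F])
    then have "?ms * (?ms * (b i j k * ?F)) = ?ms * (?ms * (?F * b i j k))" by simp
    then have "b i j k * ?F = ?F * b i j k"
      by (simp only: mult.assoc[symmetric] msign_sq mult_1_left)
    then show "f r * b i j k = b i j k * f r" unfolding f_def by simp
  qed
qed

end
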